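(* Consider the Postdoc secretary problem with $n$ candidates in which, if the candidate accepted at the $k$-th interview is the overall second best candidate, the payoff is $1-k/n$, and otherwise (including accepting nobody) the payoff is $0$. Then there exist integers $0\le r(n)\le s(n)\le n$ such that the following strategy maximizes the expected payoff among all strategies: reject the first $r(n)$ interviewed candidates; for interviews $k$ with $r(n)<k\le s(n)$, accept the first candidate which is better than all the preceding ones; after the $s(n)$-th interview, accept the first candidate which is either the best or the second best among the candidates interviewed so far.
   Context: Setting (secretary-type problem): $n$ candidates have distinct qualities (a strict total order) and are interviewed one at a time in uniformly random order (all $n!$ orders equally likely). After the $k$-th interview, the interviewer knows only the relative ranks of the first $k$ candidates among themselves and must immediately and irrevocably either accept the $k$-th candidate (stopping the process) or reject it; rejected candidates cannot be recalled. A strategy is a rule making this decision at each step using only the relative ranks observed so far (it may accept nobody). *)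

theory Defs
  imports Complex_Main
begin

text \<open>Candidates have qualities 0,...,n-1 (larger = better).  An interview order is a
  list xs that is a permutation of [0..<n]; xs ! (k-1) is the quality of the k-th
  interviewed candidate.\<close>

definition orders :: "nat \<Rightarrow> nat list set" where
  "orders n = {xs. distinct xs \<and> set xs = {0..<n}}"

text \<open>Relative ranks of a prefix: each entry is the number of prefix members below it.
  This is exactly the information about the relative order of the observed candidates.\<close>

definition rel_pattern :: "nat list \<Rightarrow> nat list" where
  "rel_pattern ys = map (\<lambda>y. card {z \<in> set ys. z < y}) ys"

text \<open>A (deterministic) strategy: after the k-th interview it sees the relative-rank
  pattern of the first k candidates (a list of length k) and answers True = accept.\<close>

type_synonym strategy = "nat list \<Rightarrow> bool"

definition stop_time :: "strategy \<Rightarrow> nat list \<Rightarrow> nat option" where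
  "stop_time S xs =
     (if \<exists>k. 1 \<le> k \<and> k \<le> length xs \<and> S (rel_pattern (take k xs))
      then Some (LEAST k. 1 \<le> k \<and> k \<le> length xs \<and> S (rel_pattern (take k xs)))
      else None)"

text \<open>Payoff: accepting at interview k the overall second best candidate (exactly one
  candidate is better) gives 1 - k/n; anything else (incl. accepting nobody) gives 0.\<close>

definition postdoc_payoff :: "nat \<Rightarrow> strategy \<Rightarrow> nat list \<Rightarrow> real" where
  "postdoc_payoff n S xs =
     (case stop_time S xs of
        None \<Rightarrow> 0
      | Some k \<Rightarrow> (if card {j. j < n \<and> xs ! j > xs ! (k - 1)} = 1
                   then 1 - real k / real n else 0))"

definition expected_payoff :: "nat \<Rightarrow> strategy \<Rightarrow> real" where
  "expected_payoff n S = (\<Sum>xs\<in>orders n. postdoc_payoff n S xs) / fact n"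

text \<open>The threshold strategy: with k = length p and c = number of earlier candidates worse
  than the current one, the current candidate is best so far iff c + 1 = k, and best or
  second best so far iff c + 2 \<ge> k.\<close>

definition threshold_strategy :: "nat \<Rightarrow> nat \<Rightarrow> strategy" where
  "threshold_strategy r s p =
     (let k = length p; c = p ! (k - 1) in
        (r < k \<and> k \<le> s \<and> c + 1 = k) \<or> (s < k \<and> c + 2 \<ge> k))"

end

theory Submission
  imports Defs "HOL-Combinatorics.Multiset_Permutations"
begin

definition rk :: "nat set \<Rightarrow> nat \<Rightarrow> nat" where
  "rk A a = card {z\<in>A. z < a}"

lemma rel_pattern_rk: "rel_pattern ys = map (rk (set ys)) ys"
  by (simp add: rel_pattern_def rk_def)

lemma rk_less:
  assumes "finite A" "a \<in> A" "a < b"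
  shows "rk A a < rk A b"
proof -
  have "{z\<in>A. z < a} \<subset> {z\<in>A. z < b}" using assms by auto
  then show ?thesis unfolding rk_def by (intro psubset_card_mono) (use assms in auto)
qed

lemma rk_mono:
  assumes "finite A" "a \<le> b"
  shows "rk A a \<le> rk A b"
  unfolding rk_def using assms by (intro card_mono) auto

lemma rk_bound:
  assumes "finite A" "a \<in> A"
  shows "rk A a < card A"
proof -
  have "{z\<in>A. z < a} \<subset> A" using assms by auto
  then show ?thesis unfolding rk_def using assms psubset_card_mono by blast
qed

lemma rk_smono: "finite A \<Longrightarrow> strict_mono_on A (rk A)"
  by (auto intro!: strict_mono_onI rk_less)

lemma rk_inj: "finite A \<Longrightarrow> inj_on (rk A) A"
  using rk_smono strict_mono_on_imp_inj_on by blast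

lemma rk_bij:
  assumes "finite A"
  shows "bij_betw (rk A) A {0..<card A}"
proof -
  have inj: "inj_on (rk A) A" using rk_inj assms by blast
  have sub: "rk A ` A \<subseteq> {0..<card A}" using rk_bound assms by auto
  have "card (rk A ` A) = card {0..<card A}" using card_image[OF inj] by simp
  then have "rk A ` A = {0..<card A}" using card_subset_eq[OF _ sub] by simp
  then show ?thesis using inj by (simp add: bij_betw_def)
qed

lemma rk_image:
  assumes "finite A" "strict_mono_on A f" "a \<in> A"
  shows "rk (f ` A) (f a) = rk A a"
proof -
  have inj: "inj_on f A" using assms strict_mono_on_imp_inj_on by blast
  have lt: "f z < f a \<longleftrightarrow> z < a" if z: "z \<in> A" for z
  proof (cases "z < a")
    case True then show ?thesis using strict_mono_onD[OF assms(2) z assms(3)] by simp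
  next
    case False
    then consider "z = a" | "a < z" by linarith
    then show ?thesis
    proof cases
      case 2 then show ?thesis using strict_mono_onD[OF assms(2) assms(3) z] False by simp
    qed (use False in simp)
  qed
  have "{z\<in>f ` A. z < f a} = f ` {z\<in>A. z < a}" using lt by auto
  moreover have "card (f ` {z\<in>A. z < a}) = card {z\<in>A. z < a}"
    by (rule card_image) (use inj in \<open>auto intro: inj_on_subset\<close>)
  ultimately show ?thesis unfolding rk_def by simp
qed

lemma rp_map:
  assumes "strict_mono_on (set ys) f"
  shows "rel_pattern (map f ys) = rel_pattern ys"
  unfolding rel_pattern_rk using rk_image[OF _ assms] by simp

lemma rp_orders:
  assumes "distinct ys"
  shows "rel_pattern ys \<in> orders (length ys)"
proof -
  have b: "bij_betw (rk (set ys)) (set ys) {0..<length ys}"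
    using rk_bij[of "set ys"] assms by (simp add: distinct_card)
  have inj: "inj_on (rk (set ys)) (set ys)" using b by (rule bij_betw_imp_inj_on)
  have im: "rk (set ys) ` set ys = {0..<length ys}" using b by (rule bij_betw_imp_surj_on)
  have "distinct (map (rk (set ys)) ys)" using assms inj by (simp add: distinct_map)
  moreover have "set (map (rk (set ys)) ys) = {0..<length ys}" using im by simp
  ultimately show ?thesis unfolding orders_def rel_pattern_rk by simp
qed

lemma rk_upto: "y < m \<Longrightarrow> rk {0..<m} y = y"
proof -
  assume "y < m"
  then have "{z\<in>{0..<m}. z < y} = {0..<y}" by auto
  then show ?thesis by (simp add: rk_def)
qed

lemma rp_id:
  assumes "p \<in> orders m"
  shows "rel_pattern p = p"
proof -
  have sp: "set p = {0..<m}" using assms unfolding orders_def by simp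
  have "map (rk {0..<m}) p = p"
  proof (rule map_idI)
    fix x assume "x \<in> set p"
    then have "x < m" using sp by simp
    then show "rk {0..<m} x = x" by (rule rk_upto)
  qed
  then show ?thesis unfolding rel_pattern_rk sp .
qed

lemma orders_length: "p \<in> orders m \<Longrightarrow> length p = m"
proof -
  assume "p \<in> orders m"
  then have "distinct p" "set p = {0..<m}" unfolding orders_def by auto
  then show ?thesis using distinct_card[of p] by simp
qed

lemma rp_take:
  assumes "distinct ys"
  shows "rel_pattern (take j (rel_pattern ys)) = rel_pattern (take j ys)"
proof -
  have sm: "strict_mono_on (set (take j ys)) (rk (set ys))"
    by (rule monotone_on_subset[OF rk_smono set_take_subset]) simp
  show ?thesis unfolding rel_pattern_rk[of ys] take_map
    using rp_map[OF sm] by simp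
qed

definition ext :: "nat list \<Rightarrow> nat \<Rightarrow> nat list" where
  "ext p c = map (\<lambda>y. if c \<le> y then Suc y else y) p @ [c]"

lemma ext_smono: "strict_mono_on A (\<lambda>y. if c \<le> y then Suc y else (y::nat))"
  by (auto intro!: strict_mono_onI)

lemma rp_snoc:
  assumes "distinct (ys @ [y])"
  shows "rel_pattern (ys @ [y]) = ext (rel_pattern ys) (rk (set ys) y)"
proof -
  let ?A = "set ys"
  have fin: "finite ?A" by simp
  have yn: "y \<notin> ?A" using assms by simp
  have last: "rk (insert y ?A) y = rk ?A y" unfolding rk_def
    by (rule arg_cong[where f=card]) auto
  have other: "rk (insert y ?A) z = (if rk ?A y \<le> rk ?A z then Suc (rk ?A z) else rk ?A z)"
    if z: "z \<in> ?A" for z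
  proof (cases "y < z")
    case True
    have "{w\<in>insert y ?A. w < z} = insert y {w\<in>?A. w < z}" using True by auto
    then have "rk (insert y ?A) z = Suc (rk ?A z)" unfolding rk_def using yn by simp
    moreover have "rk ?A y \<le> rk ?A z" using rk_mono[OF fin] True by simp
    ultimately show ?thesis by simp
  next
    case False
    then have zy: "z < y" using z yn by (metis linorder_neq_iff)
    have "{w\<in>insert y ?A. w < z} = {w\<in>?A. w < z}" using zy by auto
    then have "rk (insert y ?A) z = rk ?A z" unfolding rk_def by simp
    moreover have "rk ?A z < rk ?A y" using rk_less[OF fin z zy] .
    ultimately show ?thesis by simp
  qed
  show ?thesis unfolding rel_pattern_rk ext_def using last other by simp
qed

lemma ext_orders:
  assumes "p \<in> orders m" "c \<le> m"
  shows "ext p c \<in> orders (Suc m)"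
proof -
  let ?f = "\<lambda>y. if c \<le> y then Suc y else (y::nat)"
  have inj: "inj_on ?f (set p)" using ext_smono strict_mono_on_imp_inj_on by blast
  have d: "distinct p" and s: "set p = {0..<m}" using assms unfolding orders_def by auto
  have nc: "c \<notin> ?f ` set p" by auto
  have img: "?f ` {0..<m} \<union> {c} = {0..<Suc m}"
  proof (rule set_eqI, rule iffI)
    fix x assume "x \<in> ?f ` {0..<m} \<union> {c}" then show "x \<in> {0..<Suc m}" using assms(2) by auto
  next
    fix x assume x: "x \<in> {0..<Suc m}"
    show "x \<in> ?f ` {0..<m} \<union> {c}"
    proof (cases "x = c")
      case False
      show ?thesis
      proof (cases "x < c")
        case True then have "x = ?f x" "x \<in> {0..<m}" using x assms(2) by auto
        then show ?thesis by blast
      next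
        case False then have "x = ?f (x - 1)" "x - 1 \<in> {0..<m}" using x \<open>x \<noteq> c\<close> by auto
        then show ?thesis by blast
      qed
    qed simp
  qed
  show ?thesis unfolding orders_def ext_def using d s inj nc img
    by (auto simp: distinct_map)
qed

lemma ext_rp: "p \<in> orders m \<Longrightarrow> rel_pattern (take m (ext p c)) = p"
  using orders_length[of p m] rp_map[OF ext_smono] rp_id[of p m]
  by (simp add: ext_def)

lemma ext_last: "last (ext p c) = c" by (simp add: ext_def)

lemma orders_decomp:
  assumes "q \<in> orders (Suc m)"
  shows "q = ext (rel_pattern (take m q)) (last q) \<and> rel_pattern (take m q) \<in> orders m \<and> last q \<le> m"
proof -
  have d: "distinct q" and s: "set q = {0..<Suc m}" and l: "length q = Suc m"
    using assms orders_length[OF assms] unfolding orders_def by auto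
  have ne: "q \<noteq> []" using l by auto
  have lm: "last q = q ! m" using l ne by (simp add: last_conv_nth)
  obtain t v where tv: "take m q = t" "last q = v" by blast
  have tk: "take (Suc m) q = take m q @ [q ! m]" using l by (intro take_Suc_conv_app_nth) simp
  have q: "q = t @ [v]" using tk l lm tv by simp
  have lq: "v \<le> m" using s last_in_set[OF ne] tv by auto
  have d2: "distinct (t @ [v])" using d q by simp
  have nin: "v \<notin> set t" using d2 by simp
  have su: "set q = set t \<union> {v}" using q by simp
  have st: "set t = {0..<Suc m} - {v}" using nin su s by auto
  have "rk (set t) v = v"
  proof -
    have "{z\<in>set t. z < v} = {z\<in>{0..<Suc m} - {v}. z < v}" by (simp only: st)
    also have "\<dots> = {0..<v}" using lq by auto
    finally have "{z\<in>set t. z < v} = {0..<v}" .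
    then show ?thesis by (simp add: rk_def)
  qed
  moreover have "rel_pattern (t @ [v]) = t @ [v]" using rp_id[OF assms] q by simp
  ultimately have e: "t @ [v] = ext (rel_pattern t) v"
    using rp_snoc[OF d2] by simp
  have o: "rel_pattern t \<in> orders m"
    using rp_orders[of t] d2 l q by simp
  show ?thesis unfolding tv using e o lq q by simp
qed

lemma ext_inj: "inj_on (\<lambda>(p, c). ext p c) (orders m \<times> {..m})"
proof (rule inj_onI, clarsimp)
  fix p c p' c' assume p: "p \<in> orders m" and p': "p' \<in> orders m" and e: "ext p c = ext p' c'"
  then have "c = c'" by (metis ext_last)
  moreover have "p = p'" using ext_rp[OF p, of c] ext_rp[OF p', of c'] e by simp
  ultimately show "p = p' \<and> c = c'" by simp
qed

lemma orders_ext_image: "orders (Suc m) = (\<lambda>(p, c). ext p c) ` (orders m \<times> {..m})"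
proof
  show "orders (Suc m) \<subseteq> (\<lambda>(p, c). ext p c) ` (orders m \<times> {..m})"
  proof
    fix q assume "q \<in> orders (Suc m)"
    from orders_decomp[OF this] show "q \<in> (\<lambda>(p, c). ext p c) ` (orders m \<times> {..m})"
      by (auto intro!: image_eqI[where x="(rel_pattern (take m q), last q)"])
  qed
next
  show "(\<lambda>(p, c). ext p c) ` (orders m \<times> {..m}) \<subseteq> orders (Suc m)"
    using ext_orders by auto
qed

definition Fib :: "nat \<Rightarrow> nat list \<Rightarrow> nat list set" where
  "Fib n q = {xs \<in> orders n. rel_pattern (take (length q) xs) = q}"

definition inv_rk :: "nat set \<Rightarrow> nat \<Rightarrow> nat" where
  "inv_rk A j = the_inv_into A (rk A) j"

definition arr :: "nat set \<Rightarrow> nat list \<Rightarrow> nat list" where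
  "arr A q = map (inv_rk A) q"

definition Subs :: "nat \<Rightarrow> nat \<Rightarrow> nat set set" where
  "Subs n m = {A. A \<subseteq> {0..<n} \<and> card A = m}"

lemma finite_orders: "finite (orders n)"
proof -
  have "orders n = permutations_of_set {0..<n}"
    unfolding orders_def permutations_of_set_def by auto
  then show ?thesis by simp
qed

lemma card_orders: "card (orders n) = fact n"
proof -
  have "orders n = permutations_of_set {0..<n}"
    unfolding orders_def permutations_of_set_def by auto
  then show ?thesis by simp
qed

lemma finite_Subs: "finite (Subs n m)"
  unfolding Subs_def by (rule finite_subset[of _ "Pow {0..<n}"]) auto

lemma card_Subs: "card (Subs n m) = n choose m"
  unfolding Subs_def using n_subsets[of "{0..<n}" m] by simp

lemma inv_rk_props:
  assumes "finite A" "j < card A"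
  shows "inv_rk A j \<in> A" "rk A (inv_rk A j) = j"
proof -
  have b: "bij_betw (rk A) A {0..<card A}" using rk_bij assms(1) .
  have jb: "j \<in> {0..<card A}" using assms by simp
  show "inv_rk A j \<in> A" unfolding inv_rk_def
    using bij_betw_the_inv_into[OF b] jb by (meson bij_betwE)
  show "rk A (inv_rk A j) = j" unfolding inv_rk_def
    using f_the_inv_into_f_bij_betw[OF b] jb by blast
qed

lemma inv_rk_rk:
  assumes "finite A" "a \<in> A"
  shows "inv_rk A (rk A a) = a"
  unfolding inv_rk_def using the_inv_into_f_f[OF rk_inj[OF assms(1)] assms(2)] .

lemma arr_props:
  assumes "A \<in> Subs n m" "q \<in> orders m"
  shows "distinct (arr A q)" "set (arr A q) = A" "length (arr A q) = m" "rel_pattern (arr A q) = q"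
proof -
  have fin: "finite A" and cA: "card A = m" using assms(1) unfolding Subs_def
    by (auto intro: finite_subset)
  have b: "bij_betw (rk A) A {0..<m}" using rk_bij[OF fin] cA by simp
  have bi: "bij_betw (inv_rk A) {0..<m} A"
    unfolding inv_rk_def by (rule bij_betw_the_inv_into[OF b])
  have dq: "distinct q" and sq: "set q = {0..<m}" using assms(2) unfolding orders_def by auto
  show "distinct (arr A q)" unfolding arr_def using dq bi sq
    by (simp add: distinct_map bij_betw_imp_inj_on)
  show sa: "set (arr A q) = A" unfolding arr_def using bi sq
    by (simp add: bij_betw_imp_surj_on)
  show "length (arr A q) = m" unfolding arr_def using orders_length[OF assms(2)] by simp
  have "map (rk A \<circ> inv_rk A) q = q"
  proof (rule map_idI)
    fix x assume "x \<in> set q"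
    then have "x < card A" using sq cA by simp
    then show "(rk A \<circ> inv_rk A) x = x" using inv_rk_props[OF fin] by simp
  qed
  then have "map (rk A) (map (inv_rk A) q) = q" by simp
  then show "rel_pattern (arr A q) = q" unfolding rel_pattern_rk sa
    by (simp add: arr_def)
qed

definition fibmap :: "nat list \<Rightarrow> nat set \<times> nat list \<Rightarrow> nat list" where
  "fibmap q = (\<lambda>(A, ys). arr A q @ ys)"

definition FibDom :: "nat \<Rightarrow> nat \<Rightarrow> (nat set \<times> nat list) set" where
  "FibDom n m = Sigma (Subs n m) (\<lambda>A. permutations_of_set ({0..<n} - A))"

lemma fib_bij:
  assumes "q \<in> orders m" "m \<le> n"
  shows "bij_betw (fibmap q) (FibDom n m) (Fib n q)"
proof (rule bij_betw_byWitness[where f'="\<lambda>xs. (set (take m xs), drop m xs)"])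
  have lq: "length q = m" using orders_length[OF assms(1)] .
  show "\<forall>a\<in>FibDom n m. (set (take m (fibmap q a)), drop m (fibmap q a)) = a"
  proof
    fix a assume "a \<in> FibDom n m"
    then obtain A ys where a: "a = (A, ys)" "A \<in> Subs n m" by (auto simp: FibDom_def)
    show "(set (take m (fibmap q a)), drop m (fibmap q a)) = a"
      using arr_props[OF a(2) assms(1)] a(1) by (simp add: fibmap_def)
  qed
  show "fibmap q ` FibDom n m \<subseteq> Fib n q"
  proof
    fix xs assume "xs \<in> fibmap q ` FibDom n m"
    then obtain A ys where A: "A \<in> Subs n m" and ys: "ys \<in> permutations_of_set ({0..<n} - A)"
      and xs: "xs = arr A q @ ys" by (auto simp: FibDom_def fibmap_def)
    note ap = arr_props[OF A assms(1)]
    have sub: "A \<subseteq> {0..<n}" using A by (simp add: Subs_def)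
    have dys: "distinct ys" and sys: "set ys = {0..<n} - A" using ys permutations_of_setD by auto
    have "distinct xs" using xs ap(1,2) dys sys by auto
    moreover have "set xs = {0..<n}" using xs ap(2) sys sub by auto
    moreover have "take (length q) xs = arr A q" using xs ap(3) lq by simp
    ultimately show "xs \<in> Fib n q" unfolding Fib_def orders_def using ap(4) by simp
  qed
  show "\<forall>xs\<in>Fib n q. fibmap q (set (take m xs), drop m xs) = xs"
  proof
    fix xs assume x: "xs \<in> Fib n q"
    then have d: "distinct xs" and s: "set xs = {0..<n}" and rp: "rel_pattern (take m xs) = q"
      using lq unfolding Fib_def orders_def by auto
    let ?A = "set (take m xs)"
    have fin: "finite ?A" by simp
    have "arr ?A q = map (inv_rk ?A) (map (rk ?A) (take m xs))"
      unfolding arr_def rp[symmetric] rel_pattern_rk ..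
    also have "\<dots> = map (inv_rk ?A \<circ> rk ?A) (take m xs)" by simp
    also have "\<dots> = take m xs"
      by (rule map_idI) (simp add: inv_rk_rk[OF fin])
    finally show "fibmap q (?A, drop m xs) = xs" by (simp add: fibmap_def)
  qed
  show "(\<lambda>xs. (set (take m xs), drop m xs)) ` Fib n q \<subseteq> FibDom n m"
  proof
    fix a assume "a \<in> (\<lambda>xs. (set (take m xs), drop m xs)) ` Fib n q"
    then obtain xs where x: "xs \<in> Fib n q" and a: "a = (set (take m xs), drop m xs)" by auto
    then have d: "distinct xs" and s: "set xs = {0..<n}"
      unfolding Fib_def orders_def by auto
    have l: "length xs = n" using x orders_length unfolding Fib_def by auto
    have sub: "set (take m xs) \<subseteq> {0..<n}" using s set_take_subset by metis
    have c: "card (set (take m xs)) = m" using d l assms(2) by (simp add: distinct_card)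
    have dis: "set (take m xs) \<inter> set (drop m xs) = {}"
      using set_take_disj_set_drop_if_distinct[OF d, of m m] by simp
    have un: "set (take m xs) \<union> set (drop m xs) = {0..<n}"
      using s by (metis set_append append_take_drop_id)
    have "set (drop m xs) = {0..<n} - set (take m xs)" using dis un by blast
    moreover have "distinct (drop m xs)" using d by simp
    ultimately show "a \<in> FibDom n m" unfolding FibDom_def Subs_def using a sub c
      by (auto intro!: permutations_of_setI)
  qed
qed

lemma sum_Fib:
  assumes "q \<in> orders m" "m \<le> n"
  shows "(\<Sum>xs\<in>Fib n q. h xs) = (\<Sum>A\<in>Subs n m. \<Sum>ys\<in>permutations_of_set ({0..<n} - A). h (arr A q @ ys))"
proof -
  have "(\<Sum>xs\<in>Fib n q. h xs) = (\<Sum>a\<in>FibDom n m. h (fibmap q a))"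
    using sum.reindex_bij_betw[OF fib_bij[OF assms], of h] by simp
  also have "\<dots> = (\<Sum>(A,ys)\<in>FibDom n m. h (arr A q @ ys))"
    unfolding fibmap_def by (simp add: split_def)
  also have "\<dots> = (\<Sum>A\<in>Subs n m. \<Sum>ys\<in>permutations_of_set ({0..<n} - A). h (arr A q @ ys))"
    unfolding FibDom_def
    by (rule sum.Sigma[symmetric]) (auto simp: finite_Subs)
  finally show ?thesis .
qed

lemma card_perm_compl:
  assumes "A \<in> Subs n m"
  shows "card (permutations_of_set ({0..<n} - A)) = fact (n - m)"
proof -
  have "A \<subseteq> {0..<n}" "card A = m" using assms by (auto simp: Subs_def)
  then have "card ({0..<n} - A) = n - m" by (simp add: card_Diff_subset finite_subset)
  then show ?thesis by simp
qed

lemma card_Fib: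
  assumes "q \<in> orders m" "m \<le> n"
  shows "real (card (Fib n q)) = fact n / fact m"
proof -
  have "card (Fib n q) = (\<Sum>xs\<in>Fib n q. 1)" by simp
  also have "\<dots> = (\<Sum>A\<in>Subs n m. \<Sum>ys\<in>permutations_of_set ({0..<n} - A). (1::nat))"
    by (rule sum_Fib[OF assms])
  also have "\<dots> = (\<Sum>A\<in>Subs n m. fact (n - m))"
    by (rule sum.cong) (auto simp: card_perm_compl simp del: card_permutations_of_set)
  also have "\<dots> = (n choose m) * fact (n - m)" by (simp add: card_Subs)
  finally have "real (card (Fib n q)) = real (n choose m) * fact (n - m)" by simp
  also have "\<dots> = fact n / fact m"
  proof -
    have "(fact m * fact (n - m) * (n choose m) :: nat) = fact n" by (rule binomial_fact_lemma[OF assms(2)])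
    then have "real (fact m * fact (n - m) * (n choose m)) = real (fact n)" by simp
    then have "(fact m * fact (n - m) * real (n choose m)) = fact n"
      by (simp only: of_nat_mult of_nat_fact)
    moreover have "(fact m :: real) \<noteq> 0" by simp
    ultimately show ?thesis by (simp add: eq_divide_eq mult_ac)
  qed
  finally show ?thesis .
qed

lemma count_X1:
  assumes "1 \<le> m"
  shows "card {A\<in>Subs (Suc (Suc N)) m. N \<in> A \<and> Suc N \<notin> A} = N choose (m - 1)"
proof -
  let ?X = "{A\<in>Subs (Suc (Suc N)) m. N \<in> A \<and> Suc N \<notin> A}"
  have "bij_betw (insert N) (Subs N (m - 1)) ?X"
  proof (rule bij_betw_byWitness[where f'="\<lambda>A. A - {N}"])
    show "\<forall>B\<in>Subs N (m - 1). insert N B - {N} = B" unfolding Subs_def by auto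
    show "\<forall>A\<in>?X. insert N (A - {N}) = A" by auto
    show "insert N ` Subs N (m - 1) \<subseteq> ?X"
    proof
      fix A assume "A \<in> insert N ` Subs N (m - 1)"
      then obtain B where B: "B \<subseteq> {0..<N}" "card B = m - 1" and A: "A = insert N B"
        unfolding Subs_def by auto
      have fB: "finite B" using B(1) finite_subset by blast
      have "N \<notin> B" using B(1) by auto
      then have "card A = m" using A B(2) fB assms by simp
      moreover have "A \<subseteq> {0..<Suc (Suc N)}" using A B(1) by auto
      moreover have "Suc N \<notin> A" using A B(1) by auto
      ultimately show "A \<in> ?X" unfolding Subs_def using A by simp
    qed
    show "(\<lambda>A. A - {N}) ` ?X \<subseteq> Subs N (m - 1)"
    proof
      fix B assume "B \<in> (\<lambda>A. A - {N}) ` ?X"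
      then obtain A where A: "A \<subseteq> {0..<Suc (Suc N)}" "card A = m" "N \<in> A" "Suc N \<notin> A"
        and B: "B = A - {N}" unfolding Subs_def by auto
      have fA: "finite A" using A(1) finite_subset by blast
      have "B \<subseteq> {0..<N}"
      proof
        fix x assume "x \<in> B"
        then have "x \<in> A" "x \<noteq> N" using B by auto
        moreover then have "x \<noteq> Suc N" using A(4) by auto
        ultimately show "x \<in> {0..<N}" using A(1) by (auto simp: less_Suc_eq)
      qed
      moreover have "card B = m - 1" using B A(2,3) fA by simp
      ultimately show "B \<in> Subs N (m - 1)" unfolding Subs_def by simp
    qed
  qed
  then have "card ?X = card (Subs N (m - 1))" by (simp add: bij_betw_same_card)
  then show ?thesis by (simp add: card_Subs)
qed

lemma count_X2:
  assumes "2 \<le> m"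
  shows "card {A\<in>Subs (Suc (Suc N)) m. N \<in> A \<and> Suc N \<in> A} = N choose (m - 2)"
proof -
  let ?X = "{A\<in>Subs (Suc (Suc N)) m. N \<in> A \<and> Suc N \<in> A}"
  have "bij_betw (\<lambda>B. insert N (insert (Suc N) B)) (Subs N (m - 2)) ?X"
  proof (rule bij_betw_byWitness[where f'="\<lambda>A. A - {N, Suc N}"])
    show "\<forall>B\<in>Subs N (m - 2). insert N (insert (Suc N) B) - {N, Suc N} = B" unfolding Subs_def by auto
    show "\<forall>A\<in>?X. insert N (insert (Suc N) (A - {N, Suc N})) = A" by auto
    show "(\<lambda>B. insert N (insert (Suc N) B)) ` Subs N (m - 2) \<subseteq> ?X"
    proof
      fix A assume "A \<in> (\<lambda>B. insert N (insert (Suc N) B)) ` Subs N (m - 2)"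
      then obtain B where B: "B \<subseteq> {0..<N}" "card B = m - 2" and A: "A = insert N (insert (Suc N) B)"
        unfolding Subs_def by auto
      have fB: "finite B" using B(1) finite_subset by blast
      have "N \<notin> B" "Suc N \<notin> B" using B(1) by auto
      then have "card A = m" using A B(2) fB assms by simp
      moreover have "A \<subseteq> {0..<Suc (Suc N)}" using A B(1) by auto
      ultimately show "A \<in> ?X" unfolding Subs_def using A by simp
    qed
    show "(\<lambda>A. A - {N, Suc N}) ` ?X \<subseteq> Subs N (m - 2)"
    proof
      fix B assume "B \<in> (\<lambda>A. A - {N, Suc N}) ` ?X"
      then obtain A where A: "A \<subseteq> {0..<Suc (Suc N)}" "card A = m" "N \<in> A" "Suc N \<in> A"
        and B: "B = A - {N, Suc N}" unfolding Subs_def by auto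
      have fA: "finite A" using A(1) finite_subset by blast
      have "B \<subseteq> {0..<N}"
      proof
        fix x assume "x \<in> B"
        then have "x \<in> A" "x \<noteq> N" "x \<noteq> Suc N" using B by auto
        then show "x \<in> {0..<N}" using A(1) by (auto simp: less_Suc_eq)
      qed
      moreover have "card B = m - 2" using B A(2,3,4) fA by (simp add: card_Diff_subset)
      ultimately show "B \<in> Subs N (m - 2)" unfolding Subs_def by simp
    qed
  qed
  then have "card ?X = card (Subs N (m - 2))" by (simp add: bij_betw_same_card)
  then show ?thesis by (simp add: card_Subs)
qed

lemma rk_top:
  assumes "A \<subseteq> {0..<Suc (Suc N)}" "N \<in> A"
  shows "rk A N = card A - 1 - (if Suc N \<in> A then 1 else 0)"
proof -
  have fA: "finite A" using assms(1) finite_subset by blast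
  have "{z\<in>A. z < N} = A - {N, Suc N}"
  proof
    show "{z\<in>A. z < N} \<subseteq> A - {N, Suc N}" by auto
    show "A - {N, Suc N} \<subseteq> {z\<in>A. z < N}"
    proof
      fix x assume "x \<in> A - {N, Suc N}"
      then show "x \<in> {z\<in>A. z < N}" using assms(1) by (auto simp: less_Suc_eq)
    qed
  qed
  then have "rk A N = card (A - {N, Suc N})" by (simp add: rk_def)
  also have "\<dots> = card A - 1 - (if Suc N \<in> A then 1 else 0)"
  proof (cases "Suc N \<in> A")
    case True
    then have "{N, Suc N} \<subseteq> A" using assms(2) by auto
    then show ?thesis using True fA by (simp add: card_Diff_subset)
  next
    case False
    then have "A - {N, Suc N} = A - {N}" by auto
    then show ?thesis using False fA assms(2) by simp
  qed
  finally show ?thesis .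
qed

lemma count_top:
  assumes "1 \<le> m" "c < m"
  shows "card {A\<in>Subs (Suc (Suc N)) m. inv_rk A c = N} =
    (if Suc c = m then N choose (m - 1) else if Suc (Suc c) = m then N choose (m - 2) else 0)"
proof -
  let ?S = "{A\<in>Subs (Suc (Suc N)) m. inv_rk A c = N}"
  have eq: "?S = {A\<in>Subs (Suc (Suc N)) m. N \<in> A \<and> rk A N = c}"
  proof (rule Collect_cong, rule conj_cong[OF refl])
    fix A assume A: "A \<in> Subs (Suc (Suc N)) m"
    then have fA: "finite A" and cA: "card A = m" unfolding Subs_def by (auto intro: finite_subset)
    show "inv_rk A c = N \<longleftrightarrow> N \<in> A \<and> rk A N = c"
    proof
      assume "inv_rk A c = N"
      then show "N \<in> A \<and> rk A N = c" using inv_rk_props[OF fA] assms cA by auto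
    next
      assume "N \<in> A \<and> rk A N = c"
      then show "inv_rk A c = N" using inv_rk_rk[OF fA] by auto
    qed
  qed
  have eq2: "{A\<in>Subs (Suc (Suc N)) m. N \<in> A \<and> rk A N = c} =
    {A\<in>Subs (Suc (Suc N)) m. N \<in> A \<and> m - 1 - (if Suc N \<in> A then 1 else 0) = c}"
  proof (rule Collect_cong)
    fix A show "(A \<in> Subs (Suc (Suc N)) m \<and> N \<in> A \<and> rk A N = c) =
        (A \<in> Subs (Suc (Suc N)) m \<and> N \<in> A \<and> m - 1 - (if Suc N \<in> A then 1 else 0) = c)"
      using rk_top[of A N] unfolding Subs_def by auto
  qed
  have two: "2 \<le> m" if "A \<in> Subs (Suc (Suc N)) m" "N \<in> A" "Suc N \<in> A" for A
  proof -
    have "finite A" using that(1) unfolding Subs_def by (auto intro: finite_subset)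
    then have "card {N, Suc N} \<le> card A" using that(2,3) by (intro card_mono) auto
    then show ?thesis using that(1) unfolding Subs_def by simp
  qed
  show ?thesis
  proof (cases "Suc c = m")
    case True
    have "{A\<in>Subs (Suc (Suc N)) m. N \<in> A \<and> m - 1 - (if Suc N \<in> A then 1 else 0) = c} =
      {A\<in>Subs (Suc (Suc N)) m. N \<in> A \<and> Suc N \<notin> A}" using True two by fastforce
    then show ?thesis using eq eq2 count_X1[OF assms(1)] True by simp
  next
    case F1: False
    show ?thesis
    proof (cases "Suc (Suc c) = m")
      case True
      have "{A\<in>Subs (Suc (Suc N)) m. N \<in> A \<and> m - 1 - (if Suc N \<in> A then 1 else 0) = c} =
        {A\<in>Subs (Suc (Suc N)) m. N \<in> A \<and> Suc N \<in> A}" using True by auto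
      moreover have "2 \<le> m" using True by simp
      ultimately show ?thesis using eq eq2 count_X2[of m N] True F1 by simp
    next
      case False
      have E: "{A\<in>Subs (Suc (Suc N)) m. N \<in> A \<and> m - 1 - (if Suc N \<in> A then 1 else 0) = c} = {}"
      proof (rule ccontr)
        assume "{A\<in>Subs (Suc (Suc N)) m. N \<in> A \<and> m - 1 - (if Suc N \<in> A then 1 else 0) = c} \<noteq> {}"
        then obtain A where A: "A \<in> Subs (Suc (Suc N)) m" "N \<in> A" "m - 1 - (if Suc N \<in> A then 1 else 0) = c"
          by blast
        show False
        proof (cases "Suc N \<in> A")
          case True
          then have "2 \<le> m" using two A(1,2) by blast
          then show False using A(3) True False by simp
        next
          case F: False
          then show False using A(3) F1 assms(1) by simp
        qed
      qed
      have "?S = {}" by (simp only: eq eq2 E)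
      then have c0: "card ?S = 0" by (simp only: card.empty)
      show ?thesis by (subst c0) (simp add: False F1)
    qed
  qed
qed

lemma abs_alg: "(P::real) \<noteq> 0 \<Longrightarrow> Q \<noteq> 0 \<Longrightarrow> fa \<noteq> 0 \<Longrightarrow> fb \<noteq> 0 \<Longrightarrow>
   (B * fb) * (F / (fa * fb)) = (P * F) / (Q * fa) * (Q * B / P)"
  by (simp add: field_simps)
lemma abs_alg2: "(P::real) \<noteq> 0 \<Longrightarrow> Q \<noteq> 0 \<Longrightarrow> fa \<noteq> 0 \<Longrightarrow> fb \<noteq> 0 \<Longrightarrow>
   fb * (F / (fa * fb)) = (P * F) / (Q * fa) * (Q / P)"
  by (simp add: field_simps)
lemma alg1:
  fixes a b :: nat
  shows "fact (Suc b) * real ((a + b) choose a) =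
    fact (Suc (Suc (a + b))) / fact (Suc a) * (real (Suc a) * real (Suc b) / (real (Suc (Suc (a + b))) * real (Suc (a + b))))"
proof -
  have e: "real ((a + b) choose a) = fact (a + b) / (fact a * fact b)"
    using binomial_fact[of a "a+b"] by simp
  have s1: "fact (Suc b) = real (Suc b) * (fact b :: real)" by (rule fact_Suc)
  have s2: "fact (Suc (Suc (a + b))) = (real (Suc (Suc (a + b))) * real (Suc (a + b))) * (fact (a + b) :: real)"
    by (simp only: fact_Suc mult.assoc)
  have s3: "fact (Suc a) = real (Suc a) * (fact a :: real)" by (rule fact_Suc)
  show ?thesis unfolding e s1 s2 s3
    by (rule abs_alg) simp_all
qed
lemma alg2:
  fixes a b :: nat
  shows "fact (Suc b) * real ((Suc (a + b)) choose a) =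
    fact (Suc (Suc (Suc (a + b)))) / fact (Suc (Suc a)) * (real (Suc (Suc a)) * real (Suc a) / (real (Suc (Suc (Suc (a + b)))) * real (Suc (Suc (a + b)))))"
proof -
  have e: "real ((Suc (a + b)) choose a) = fact (Suc (a + b)) / (fact a * fact (Suc b))"
    using binomial_fact[of a "Suc (a+b)"] by (simp add: Suc_diff_le)
  have s2: "fact (Suc (Suc (Suc (a + b)))) = (real (Suc (Suc (Suc (a + b)))) * real (Suc (Suc (a + b)))) * (fact (Suc (a + b)) :: real)"
    by (simp only: fact_Suc[of "Suc (Suc (a+b))"] fact_Suc[of "Suc (a+b)"] mult.assoc)
  have s3: "fact (Suc (Suc a)) = (real (Suc (Suc a)) * real (Suc a)) * (fact a :: real)"
    by (simp only: fact_Suc[of "Suc a"] fact_Suc[of a] mult.assoc)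
  show ?thesis unfolding e s2 s3
    by (rule abs_alg2) simp_all
qed

definition G :: "nat \<Rightarrow> nat \<Rightarrow> nat \<Rightarrow> real" where
  "G n k c = (1 - real k / real n) *
     (if Suc c = k then real k * real (n - k) / (real n * (real n - 1))
      else if Suc (Suc c) = k then real k * (real k - 1) / (real n * (real n - 1)) else 0)"

definition pay :: "nat \<Rightarrow> nat \<Rightarrow> nat list \<Rightarrow> real" where
  "pay n k xs = (if xs ! (k - 1) + 2 = n then 1 - real k / real n else 0)"

lemma pay_Fib:
  assumes q: "q \<in> orders m" and m1: "1 \<le> m" and mn: "m \<le> n"
  shows "(\<Sum>xs\<in>Fib n q. pay n m xs) = fact n / fact m * G n m (last q)"
proof (cases "m = n")
  case True
  then have "n \<noteq> 0" using m1 by simp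
  then have "pay n m xs = 0" for xs using True by (simp add: pay_def)
  moreover have "G n m c = 0" for c using True \<open>n \<noteq> 0\<close> by (simp add: G_def)
  ultimately show ?thesis by simp
next
  case False
  then have mlt: "m < n" using mn by simp
  then obtain N where nN: "n = Suc (Suc N)" using m1
    by (metis One_nat_def Suc_le_eq Suc_lessE less_imp_Suc_add)
  have lq: "length q = m" using orders_length[OF q] .
  have sq: "set q = {0..<m}" using q unfolding orders_def by simp
  have ne: "q \<noteq> []" using lq m1 by auto
  define c where "c = last q"
  have cq: "c = q ! (m - 1)" unfolding c_def using ne lq by (simp add: last_conv_nth)
  have cm: "c < m" using last_in_set[OF ne] sq c_def by auto
  have pv: "pay n m (arr A q @ ys) = (if inv_rk A c = N then 1 - real m / real n else 0)"
    if A: "A \<in> Subs n m" for A ys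
  proof -
    have la: "length (arr A q) = m" using arr_props[OF A q] by simp
    have "(arr A q @ ys) ! (m - 1) = arr A q ! (m - 1)" using la m1 by (simp add: nth_append)
    also have "\<dots> = inv_rk A c" unfolding arr_def cq using lq m1 by simp
    finally show ?thesis unfolding pay_def nN by simp
  qed
  have "(\<Sum>xs\<in>Fib n q. pay n m xs) = (\<Sum>A\<in>Subs n m. \<Sum>ys\<in>permutations_of_set ({0..<n} - A). pay n m (arr A q @ ys))"
    by (rule sum_Fib[OF q mn])
  also have "\<dots> = (\<Sum>A\<in>Subs n m. fact (n - m) * (if inv_rk A c = N then 1 - real m / real n else 0))"
  proof (rule sum.cong[OF refl])
    fix A assume A: "A \<in> Subs n m"
    have "(\<Sum>ys\<in>permutations_of_set ({0..<n} - A). pay n m (arr A q @ ys)) =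
       (\<Sum>ys\<in>permutations_of_set ({0..<n} - A). (if inv_rk A c = N then 1 - real m / real n else 0))"
      using pv[OF A] by simp
    also have "\<dots> = real (card (permutations_of_set ({0..<n} - A))) * (if inv_rk A c = N then 1 - real m / real n else 0)"
      by simp
    also have "\<dots> = fact (n - m) * (if inv_rk A c = N then 1 - real m / real n else 0)"
      using card_perm_compl[OF A] by simp
    finally show "(\<Sum>ys\<in>permutations_of_set ({0..<n} - A). pay n m (arr A q @ ys)) =
       fact (n - m) * (if inv_rk A c = N then 1 - real m / real n else 0)" .
  qed
  also have "\<dots> = fact (n - m) * (\<Sum>A\<in>Subs n m. (if inv_rk A c = N then 1 - real m / real n else 0))"
    by (simp add: sum_distrib_left)
  also have "(\<Sum>A\<in>Subs n m. (if inv_rk A c = N then 1 - real m / real n else 0)) =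
      (\<Sum>A\<in>{A\<in>Subs n m. inv_rk A c = N}. 1 - real m / real n)"
    by (rule sum.inter_filter[symmetric]) (rule finite_Subs)
  also have "\<dots> = real (card {A\<in>Subs n m. inv_rk A c = N}) * (1 - real m / real n)" by simp
  also have "card {A\<in>Subs n m. inv_rk A c = N} =
      (if Suc c = m then N choose (m - 1) else if Suc (Suc c) = m then N choose (m - 2) else 0)"
    unfolding nN by (rule count_top[OF m1 cm])
  finally have L: "(\<Sum>xs\<in>Fib n q. pay n m xs) = fact (n - m) * (real (if Suc c = m then N choose (m - 1) else if Suc (Suc c) = m then N choose (m - 2) else 0) * (1 - real m / real n))" .
  show ?thesis
  proof (cases "Suc c = m")
    case True
    obtain a where a: "m = Suc a" using m1 by (metis Suc_le_D One_nat_def)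
    have "a \<le> N" using mlt nN a by simp
    then obtain b where b: "N = a + b" by (metis le_add_diff_inverse)
    have e1: "n - m = Suc b" using nN a b by simp
    have e2: "real n - 1 = real (Suc (a + b))" using nN b by simp
    have "fact (n - m) * real (N choose (m - 1)) = fact n / fact m * (real m * real (n - m) / (real n * (real n - 1)))"
      unfolding e1 e2 unfolding a b nN diff_Suc_1 by (rule alg1)
    then have H: "fact (n - m) * real (N choose (m - 1)) = fact n / fact m * (real m * real (n - m) / (real n * (real n - 1)))" .
    have g: "G n m c = (1 - real m / real n) * (real m * real (n - m) / (real n * (real n - 1)))"
      unfolding G_def using True by simp
    have i: "(if Suc c = m then N choose (m - 1) else if Suc (Suc c) = m then N choose (m - 2) else 0) = N choose (m - 1)"
      using True by simp
    show ?thesis unfolding L c_def[symmetric] g i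
      by (simp only: mult.assoc[symmetric] H) (simp only: mult_ac)
  next
    case F: False
    show ?thesis
    proof (cases "Suc (Suc c) = m")
      case True
      obtain a where a: "m = Suc (Suc a)" using True by metis
      have "Suc a \<le> N" using mlt nN a by simp
      then obtain b where b: "N = Suc (a + b)" by (metis add_Suc le_add_diff_inverse)
      have e1: "n - m = Suc b" using nN a b by simp
      have e2: "real n - 1 = real (Suc (Suc (a + b)))" using nN b by simp
      have e3: "real m - 1 = real (Suc a)" using a by simp
      have "fact (n - m) * real (N choose (m - 2)) = fact n / fact m * (real m * (real m - 1) / (real n * (real n - 1)))"
      proof -
        have s2: "Suc (Suc a) - 2 = a" by simp
        show ?thesis unfolding e1 e2 e3 unfolding a b nN s2 by (rule alg2)
      qed
      then have H: "fact (n - m) * real (N choose (m - 2)) = fact n / fact m * (real m * (real m - 1) / (real n * (real n - 1)))" .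
      have g: "G n m c = (1 - real m / real n) * (real m * (real m - 1) / (real n * (real n - 1)))"
        unfolding G_def using True F by simp
      have i: "(if Suc c = m then N choose (m - 1) else if Suc (Suc c) = m then N choose (m - 2) else 0) = N choose (m - 2)"
        using True F by simp
      show ?thesis unfolding L c_def[symmetric] g i
        by (simp only: mult.assoc[symmetric] H) (simp only: mult_ac)
    next
      case False
      then show ?thesis unfolding L G_def c_def[symmetric] using F by simp
    qed
  qed
qed

definition NS :: "strategy \<Rightarrow> nat \<Rightarrow> nat list \<Rightarrow> bool" where
  "NS S m xs = (\<forall>i. 1 \<le> i \<and> i \<le> m \<longrightarrow> \<not> S (rel_pattern (take i xs)))"

lemma NS_pat:
  assumes "distinct xs" "m \<le> k"
  shows "NS S m (rel_pattern (take k xs)) = NS S m xs"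
proof -
  have "rel_pattern (take i (rel_pattern (take k xs))) = rel_pattern (take i xs)" if "i \<le> m" for i
  proof -
    have "rel_pattern (take i (rel_pattern (take k xs))) = rel_pattern (take i (take k xs))"
      using rp_take[of "take k xs" i] assms(1) by simp
    also have "\<dots> = rel_pattern (take i xs)" using that assms(2) by (simp add: min_def)
    finally show ?thesis .
  qed
  then show ?thesis unfolding NS_def by auto
qed

lemma NS_ext:
  assumes "p \<in> orders m"
  shows "NS S m (ext p c) = NS S m p"
proof -
  have lp: "length p = m" using orders_length[OF assms] .
  have "rel_pattern (take i (ext p c)) = rel_pattern (take i p)" if "i \<le> m" for i
  proof -
    have "take i (ext p c) = map (\<lambda>y. if c \<le> y then Suc y else y) (take i p)"
      using that lp by (simp add: ext_def take_map)
    then show ?thesis using rp_map[OF ext_smono] by simp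
  qed
  then show ?thesis unfolding NS_def by auto
qed

lemma sum_orders_Suc:
  "(\<Sum>q\<in>orders (Suc m). F q) = (\<Sum>p\<in>orders m. \<Sum>c\<le>m. F (ext p c))"
proof -
  have "(\<Sum>q\<in>orders (Suc m). F q) = (\<Sum>pc\<in>orders m \<times> {..m}. F ((\<lambda>(p, c). ext p c) pc))"
    unfolding orders_ext_image by (rule sum.reindex[OF ext_inj, unfolded comp_def])
  also have "\<dots> = (\<Sum>p\<in>orders m. \<Sum>c\<le>m. F (ext p c))"
    by (simp add: sum.cartesian_product split_def finite_orders)
  finally show ?thesis .
qed

lemma sum_group_orders:
  assumes "k \<le> n"
  shows "(\<Sum>xs\<in>orders n. h xs) = (\<Sum>q\<in>orders k. \<Sum>xs\<in>Fib n q. h xs)"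
proof -
  have im: "(\<lambda>xs. rel_pattern (take k xs)) ` orders n \<subseteq> orders k"
  proof
    fix q assume "q \<in> (\<lambda>xs. rel_pattern (take k xs)) ` orders n"
    then obtain xs where xs: "xs \<in> orders n" and q: "q = rel_pattern (take k xs)" by blast
    have "distinct (take k xs)" using xs unfolding orders_def by simp
    moreover have "length (take k xs) = k" using orders_length[OF xs] assms by simp
    ultimately show "q \<in> orders k" using rp_orders q by metis
  qed
  have "(\<Sum>xs\<in>orders n. h xs) = (\<Sum>q\<in>orders k. sum h {xs \<in> orders n. rel_pattern (take k xs) = q})"
    by (rule sum.group[symmetric, OF finite_orders finite_orders im])
  also have "\<dots> = (\<Sum>q\<in>orders k. \<Sum>xs\<in>Fib n q. h xs)"
  proof (rule sum.cong[OF refl])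
    fix q assume "q \<in> orders k"
    then have "length q = k" by (rule orders_length)
    then show "sum h {xs \<in> orders n. rel_pattern (take k xs) = q} = (\<Sum>xs\<in>Fib n q. h xs)"
      unfolding Fib_def by simp
  qed
  finally show ?thesis .
qed

fun VV :: "nat \<Rightarrow> nat \<Rightarrow> real" where
  "VV n 0 = 0"
| "VV n (Suc i) = (\<Sum>c\<le>n - Suc i. max (G n (n - i) c) (VV n i)) / real (n - i)"

definition V :: "nat \<Rightarrow> nat \<Rightarrow> real" where
  "V n m = VV n (n - m)"

lemma V_n: "V n n = 0" by (simp add: V_def)

lemma V_step:
  assumes "m < n"
  shows "V n m = (\<Sum>c\<le>m. max (G n (Suc m) c) (V n (Suc m))) / real (Suc m)"
proof -
  obtain i where i: "n - m = Suc i" using assms by (metis Suc_diff_Suc)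
  have "n - Suc i = m" "n - i = Suc m" using i assms by auto
  moreover have "n - Suc m = i" using i by simp
  ultimately show ?thesis unfolding V_def i by simp
qed

definition Phi :: "nat \<Rightarrow> strategy \<Rightarrow> nat \<Rightarrow> real" where
  "Phi n S m = (\<Sum>xs\<in>orders n. (\<Sum>j\<in>{1..m}. (if NS S (j - 1) xs \<and> S (rel_pattern (take j xs)) then pay n j xs else 0))
       + (if NS S m xs then V n m else 0))"

definition Dq :: "nat \<Rightarrow> strategy \<Rightarrow> nat \<Rightarrow> nat list \<Rightarrow> real" where
  "Dq n S m q = (if S q then G n (Suc m) (last q) else V n (Suc m)) - max (G n (Suc m) (last q)) (V n (Suc m))"

lemma Phi_step:
  assumes "m < n"
  shows "Phi n S (Suc m) - Phi n S m = fact n / fact (Suc m) * (\<Sum>q\<in>orders (Suc m). if NS S m q then Dq n S m q else 0)"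
proof -
  let ?V' = "V n (Suc m)"
  let ?K = "fact n / fact (Suc m) :: real"
  have NSS: "NS S (Suc m) xs = (NS S m xs \<and> \<not> S (rel_pattern (take (Suc m) xs)))" for xs
    unfolding NS_def using le_Suc_eq by auto
  have "Phi n S (Suc m) - Phi n S m = (\<Sum>xs\<in>orders n. (if NS S m xs then (if S (rel_pattern (take (Suc m) xs)) then pay n (Suc m) xs else ?V') - V n m else 0))"
    unfolding Phi_def sum_subtractf[symmetric]
  proof (rule sum.cong[OF refl])
    fix xs
    have "{1..Suc m} = insert (Suc m) {1..m}" by auto
    then have "(\<Sum>j\<in>{1..Suc m}. (if NS S (j - 1) xs \<and> S (rel_pattern (take j xs)) then pay n j xs else 0)) =
      (if NS S m xs \<and> S (rel_pattern (take (Suc m) xs)) then pay n (Suc m) xs else 0) +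
      (\<Sum>j\<in>{1..m}. (if NS S (j - 1) xs \<and> S (rel_pattern (take j xs)) then pay n j xs else 0))"
      by simp
    then show "(\<Sum>j\<in>{1..Suc m}. (if NS S (j - 1) xs \<and> S (rel_pattern (take j xs)) then pay n j xs else 0)) +
          (if NS S (Suc m) xs then V n (Suc m) else 0) -
          ((\<Sum>j\<in>{1..m}. (if NS S (j - 1) xs \<and> S (rel_pattern (take j xs)) then pay n j xs else 0)) +
           (if NS S m xs then V n m else 0)) =
          (if NS S m xs then (if S (rel_pattern (take (Suc m) xs)) then pay n (Suc m) xs else ?V') - V n m else 0)"
      unfolding NSS by auto
  qed
  also have "\<dots> = (\<Sum>q\<in>orders (Suc m). \<Sum>xs\<in>Fib n q. (if NS S m xs then (if S (rel_pattern (take (Suc m) xs)) then pay n (Suc m) xs else ?V') - V n m else 0))"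
    using assms by (intro sum_group_orders) simp
  also have "\<dots> = (\<Sum>q\<in>orders (Suc m). if NS S m q then ?K * ((if S q then G n (Suc m) (last q) else ?V') - V n m) else 0)"
  proof (rule sum.cong[OF refl])
    fix q assume q: "q \<in> orders (Suc m)"
    have lq: "length q = Suc m" using orders_length[OF q] .
    have xsq: "NS S m xs = NS S m q" "rel_pattern (take (Suc m) xs) = q" if "xs \<in> Fib n q" for xs
    proof -
      have d: "distinct xs" and r: "rel_pattern (take (Suc m) xs) = q" using that lq unfolding Fib_def orders_def by auto
      show "rel_pattern (take (Suc m) xs) = q" by (rule r)
      show "NS S m xs = NS S m q" using NS_pat[OF d, of m "Suc m" S] r by simp
    qed
    have "(\<Sum>xs\<in>Fib n q. (if NS S m xs then (if S (rel_pattern (take (Suc m) xs)) then pay n (Suc m) xs else ?V') - V n m else 0)) =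
          (\<Sum>xs\<in>Fib n q. (if NS S m q then (if S q then pay n (Suc m) xs else ?V') - V n m else 0))"
      by (rule sum.cong[OF refl]) (simp add: xsq)
    also have "\<dots> = (if NS S m q then ?K * ((if S q then G n (Suc m) (last q) else ?V') - V n m) else 0)"
    proof (cases "NS S m q")
      case True
      have cF: "real (card (Fib n q)) = ?K" using card_Fib[OF q] assms by simp
      show ?thesis
      proof (cases "S q")
        case True
        have "(\<Sum>xs\<in>Fib n q. pay n (Suc m) xs - V n m) = (\<Sum>xs\<in>Fib n q. pay n (Suc m) xs) - real (card (Fib n q)) * V n m"
          by (simp add: sum_subtractf)
        also have "\<dots> = ?K * G n (Suc m) (last q) - ?K * V n m"
          using pay_Fib[OF q _ ] assms cF by simp
        finally show ?thesis using True \<open>NS S m q\<close> by (simp add: right_diff_distrib)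
      next
        case False
        have "(\<Sum>xs\<in>Fib n q. ?V' - V n m) = real (card (Fib n q)) * (?V' - V n m)" by simp
        then show ?thesis using False \<open>NS S m q\<close> cF by simp
      qed
    qed simp
    finally show "(\<Sum>xs\<in>Fib n q. (if NS S m xs then (if S (rel_pattern (take (Suc m) xs)) then pay n (Suc m) xs else ?V') - V n m else 0)) =
          (if NS S m q then ?K * ((if S q then G n (Suc m) (last q) else ?V') - V n m) else 0)" .
  qed
  also have "\<dots> = ?K * (\<Sum>q\<in>orders (Suc m). if NS S m q then (if S q then G n (Suc m) (last q) else ?V') - V n m else 0)"
    unfolding sum_distrib_left by (rule sum.cong[OF refl]) simp
  also have "(\<Sum>q\<in>orders (Suc m). if NS S m q then (if S q then G n (Suc m) (last q) else ?V') - V n m else 0) =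
      (\<Sum>q\<in>orders (Suc m). if NS S m q then Dq n S m q else 0)"
  proof -
    have A: "(\<Sum>q\<in>orders (Suc m). if NS S m q then max (G n (Suc m) (last q)) ?V' else 0) =
             (\<Sum>q\<in>orders (Suc m). if NS S m q then V n m else 0)"
    proof -
      have "(\<Sum>q\<in>orders (Suc m). if NS S m q then max (G n (Suc m) (last q)) ?V' else 0) =
          (\<Sum>p\<in>orders m. \<Sum>c\<le>m. if NS S m (ext p c) then max (G n (Suc m) (last (ext p c))) ?V' else 0)"
        by (rule sum_orders_Suc)
      also have "\<dots> = (\<Sum>p\<in>orders m. if NS S m p then (\<Sum>c\<le>m. max (G n (Suc m) c) ?V') else 0)"
        by (rule sum.cong[OF refl]) (simp add: NS_ext ext_last)
      also have "\<dots> = (\<Sum>p\<in>orders m. if NS S m p then real (Suc m) * V n m else 0)"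
      proof -
        have e: "(\<Sum>c\<le>m. max (G n (Suc m) c) ?V') = real (Suc m) * V n m"
          unfolding V_step[OF assms] by simp
        show ?thesis by (simp only: e)
      qed
      also have "\<dots> = (\<Sum>p\<in>orders m. \<Sum>c\<le>m. if NS S m (ext p c) then V n m else 0)"
        by (rule sum.cong[OF refl]) (simp add: NS_ext)
      also have "\<dots> = (\<Sum>q\<in>orders (Suc m). if NS S m q then V n m else 0)"
        by (rule sum_orders_Suc[symmetric])
      finally show ?thesis .
    qed
    have "(\<Sum>q\<in>orders (Suc m). if NS S m q then Dq n S m q else 0) =
      (\<Sum>q\<in>orders (Suc m). (if NS S m q then (if S q then G n (Suc m) (last q) else ?V') else 0)
          - (if NS S m q then max (G n (Suc m) (last q)) ?V' else 0))"
      by (rule sum.cong[OF refl]) (simp add: Dq_def)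
    also have "\<dots> = (\<Sum>q\<in>orders (Suc m). (if NS S m q then (if S q then G n (Suc m) (last q) else ?V') else 0))
          - (\<Sum>q\<in>orders (Suc m). if NS S m q then V n m else 0)"
      by (simp only: sum_subtractf A)
    also have "\<dots> = (\<Sum>q\<in>orders (Suc m). if NS S m q then (if S q then G n (Suc m) (last q) else ?V') - V n m else 0)"
      by (simp only: sum_subtractf[symmetric]) (rule sum.cong[OF refl], simp)
    finally show ?thesis by simp
  qed
  finally show ?thesis .
qed

lemma card_above:
  assumes xs: "xs \<in> orders n" and k: "1 \<le> k" "k \<le> n"
  shows "(card {j. j < n \<and> xs ! j > xs ! (k - 1)} = 1) \<longleftrightarrow> (xs ! (k - 1) + 2 = n)"
proof -
  have d: "distinct xs" and s: "set xs = {0..<n}" using xs unfolding orders_def by auto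
  have l: "length xs = n" using orders_length[OF xs] .
  let ?v = "xs ! (k - 1)"
  have vn: "?v < n" using k l s nth_mem[of "k - 1" xs] by auto
  have inj: "inj_on (nth xs) {j. j < n \<and> xs ! j > ?v}" using d l by (intro inj_on_nth) auto
  have im: "nth xs ` {j. j < n \<and> xs ! j > ?v} = {w. w < n \<and> ?v < w}"
  proof
    show "nth xs ` {j. j < n \<and> xs ! j > ?v} \<subseteq> {w. w < n \<and> ?v < w}"
      using s l nth_mem by fastforce
    show "{w. w < n \<and> ?v < w} \<subseteq> nth xs ` {j. j < n \<and> xs ! j > ?v}"
    proof
      fix w assume w: "w \<in> {w. w < n \<and> ?v < w}"
      then have "w \<in> set xs" using s by simp
      then obtain j where "j < length xs" "xs ! j = w" by (auto simp: in_set_conv_nth)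
      then show "w \<in> nth xs ` {j. j < n \<and> xs ! j > ?v}" using w l by auto
    qed
  qed
  have "card {j. j < n \<and> xs ! j > ?v} = card {w. w < n \<and> ?v < w}"
    using card_image[OF inj] im by simp
  also have "{w. w < n \<and> ?v < w} = {Suc ?v..<n}" by auto
  finally have "card {j. j < n \<and> xs ! j > ?v} = n - Suc ?v" by simp
  then show ?thesis using vn by auto
qed

lemma payoff_sum:
  assumes xs: "xs \<in> orders n"
  shows "postdoc_payoff n S xs = (\<Sum>j\<in>{1..n}. (if NS S (j - 1) xs \<and> S (rel_pattern (take j xs)) then pay n j xs else 0))"
proof -
  have l: "length xs = n" using orders_length[OF xs] .
  show ?thesis
  proof (cases "\<exists>k. 1 \<le> k \<and> k \<le> length xs \<and> S (rel_pattern (take k xs))")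
    case True
    define k0 where "k0 = (LEAST k. 1 \<le> k \<and> k \<le> length xs \<and> S (rel_pattern (take k xs)))"
    have k0: "1 \<le> k0 \<and> k0 \<le> n \<and> S (rel_pattern (take k0 xs))"
      using LeastI_ex[OF True] l unfolding k0_def by simp
    have k0min: "\<not> S (rel_pattern (take i xs))" if "1 \<le> i" "i < k0" for i
      using not_less_Least[of i "\<lambda>k. 1 \<le> k \<and> k \<le> length xs \<and> S (rel_pattern (take k xs))"] that k0 l
      unfolding k0_def[symmetric] by auto
    have st: "stop_time S xs = Some k0" unfolding stop_time_def k0_def using True by simp
    have cond: "(NS S (j - 1) xs \<and> S (rel_pattern (take j xs))) \<longleftrightarrow> j = k0" if "j \<in> {1..n}" for j
    proof
      assume a: "NS S (j - 1) xs \<and> S (rel_pattern (take j xs))"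
      have "\<not> j < k0" using k0min a that by auto
      moreover have "\<not> k0 < j" using a k0 unfolding NS_def by auto
      ultimately show "j = k0" by simp
    next
      assume "j = k0"
      then show "NS S (j - 1) xs \<and> S (rel_pattern (take j xs))" using k0 k0min unfolding NS_def by auto
    qed
    have "(\<Sum>j\<in>{1..n}. (if NS S (j - 1) xs \<and> S (rel_pattern (take j xs)) then pay n j xs else 0)) =
          (\<Sum>j\<in>{1..n}. (if j = k0 then pay n j xs else 0))"
    proof (rule sum.cong[OF refl])
      fix j assume "j \<in> {1..n}"
      then show "(if NS S (j - 1) xs \<and> S (rel_pattern (take j xs)) then pay n j xs else 0) = (if j = k0 then pay n j xs else 0)"
        using cond[of j] by simp
    qed
    also have "\<dots> = pay n k0 xs" using k0 by simp
    also have "\<dots> = postdoc_payoff n S xs"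
      unfolding postdoc_payoff_def st pay_def using card_above[OF xs] k0 by simp
    finally show ?thesis by simp
  next
    case False
    then have st: "stop_time S xs = None" unfolding stop_time_def by simp
    have "(if NS S (j - 1) xs \<and> S (rel_pattern (take j xs)) then pay n j xs else 0) = 0" if "j \<in> {1..n}" for j
      using False that l by auto
    then show ?thesis unfolding postdoc_payoff_def st by simp
  qed
qed

lemma Phi_0: "Phi n S 0 = fact n * V n 0"
  unfolding Phi_def NS_def by (simp add: card_orders)

lemma Phi_n: "Phi n S n = (\<Sum>xs\<in>orders n. postdoc_payoff n S xs)"
  unfolding Phi_def V_n by (rule sum.cong[OF refl]) (simp add: payoff_sum)

lemma Dq_le: "Dq n S m q \<le> 0"
  unfolding Dq_def by auto

lemma Phi_diff:
  "Phi n S n - Phi n S 0 = (\<Sum>m<n. fact n / fact (Suc m) * (\<Sum>q\<in>orders (Suc m). if NS S m q then Dq n S m q else 0))"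
proof -
  have "Phi n S n - Phi n S 0 = (\<Sum>m<n. Phi n S (Suc m) - Phi n S m)"
    by (rule sum_lessThan_telescope[symmetric])
  also have "\<dots> = (\<Sum>m<n. fact n / fact (Suc m) * (\<Sum>q\<in>orders (Suc m). if NS S m q then Dq n S m q else 0))"
    by (rule sum.cong[OF refl]) (simp add: Phi_step)
  finally show ?thesis .
qed

theorem upper_bound: "expected_payoff n S \<le> V n 0"
proof -
  have "(\<Sum>m<n. fact n / fact (Suc m) * (\<Sum>q\<in>orders (Suc m). if NS S m q then Dq n S m q else 0)) \<le> 0"
  proof (rule sum_nonpos)
    fix m
    have h1: "(\<Sum>q\<in>orders (Suc m). if NS S m q then Dq n S m q else 0) \<le> 0"
      by (rule sum_nonpos) (simp add: Dq_le)
    have h2: "fact n / fact (Suc m) \<ge> (0::real)" by simp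
    show "fact n / fact (Suc m) * (\<Sum>q\<in>orders (Suc m). if NS S m q then Dq n S m q else 0) \<le> 0"
      using mult_nonneg_nonpos[OF h2 h1] .
  qed
  then have "Phi n S n \<le> Phi n S 0" using Phi_diff[of n S] by simp
  then have "(\<Sum>xs\<in>orders n. postdoc_payoff n S xs) \<le> fact n * V n 0" by (simp add: Phi_n Phi_0)
  then show ?thesis unfolding expected_payoff_def by (simp add: divide_le_eq mult.commute)
qed

theorem optimal_value:
  assumes opt: "\<And>m q. m < n \<Longrightarrow> q \<in> orders (Suc m) \<Longrightarrow>
     (S q \<longrightarrow> V n (Suc m) \<le> G n (Suc m) (last q)) \<and> (\<not> S q \<longrightarrow> G n (Suc m) (last q) \<le> V n (Suc m))"
  shows "expected_payoff n S = V n 0"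
proof -
  have "(\<Sum>m<n. fact n / fact (Suc m) * (\<Sum>q\<in>orders (Suc m). if NS S m q then Dq n S m q else 0)) = 0"
  proof (rule sum.neutral, rule ballI)
    fix m assume "m \<in> {..<n}"
    then have m: "m < n" by simp
    have "Dq n S m q = 0" if "q \<in> orders (Suc m)" for q
      using opt[OF m that] unfolding Dq_def by (cases "S q") (auto simp: max_def)
    then have "(\<Sum>q\<in>orders (Suc m). if NS S m q then Dq n S m q else 0) = 0"
      by (intro sum.neutral) auto
    then show "fact n / fact (Suc m) * (\<Sum>q\<in>orders (Suc m). if NS S m q then Dq n S m q else 0) = 0" by simp
  qed
  then have "Phi n S n = Phi n S 0" using Phi_diff[of n S] by simp
  then have "(\<Sum>xs\<in>orders n. postdoc_payoff n S xs) = fact n * V n 0" by (simp add: Phi_n Phi_0)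
  then show ?thesis unfolding expected_payoff_def by simp
qed

lemma ID1: fixes x y p :: real assumes "x \<noteq> 0" "p \<noteq> 0"
  shows "(1 - y/x) * (y*(x-y)/(x*p)) = y*(x-y)^2/(x^2*p)"
  using assms by (simp add: field_simps power2_eq_square)
lemma ID2: fixes x y p :: real assumes "x \<noteq> 0" "p \<noteq> 0"
  shows "(1 - y/x) * (y*(y-1)/(x*p)) = y*(y-1)*(x-y)/(x^2*p)"
  using assms by (simp add: field_simps power2_eq_square)
lemma ID3: fixes x y p :: real assumes "x \<noteq> 0" "p \<noteq> 0" and hp: "p = x - 1"
  shows "y*(x-y)^2/(x^2*p) + y*(y-1)*(x-y)/(x^2*p) = y*(x-y)/x^2"
proof -
  have "y*(x-y)^2/(x^2*p) + y*(y-1)*(x-y)/(x^2*p) = (y*(x-y)^2 + y*(y-1)*(x-y))/(x^2*p)"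
    by (simp add: add_divide_distrib)
  also have "y*(x-y)^2 + y*(y-1)*(x-y) = (y*(x-y)) * p" unfolding hp by (simp add: algebra_simps power2_eq_square)
  also have "(y*(x-y)) * p / (x^2*p) = y*(x-y)/x^2" using assms(2) by simp
  finally show ?thesis .
qed
lemma ID4: fixes x u j v a :: real assumes "x \<noteq> 0" "u \<noteq> 0" "j \<noteq> 0" "v \<noteq> 0"
  shows "(u*(x-u)/x^2 + v*(u*j/x^2*a))/u = j*v/x^2*(a + (x-u)/(j*v))"
  using assms by (simp add: field_simps power2_eq_square)
lemma ID5: fixes x j v p :: real assumes "j \<noteq> 0" "v \<noteq> 0" "p \<noteq> 0" and hv: "v = j - 1" and hp: "p = x - 1"
  shows "(x-j)*(x-j-1)/(v*p) - ((x-j-1)*(x-j-2)/(j*p) + (x-j-1)/(j*v)) = (x-j-1)/(j*p)"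
proof -
  have "(x-j)*(x-j-1)/(v*p) - ((x-j-1)*(x-j-2)/(j*p) + (x-j-1)/(j*v)) =
     (j*((x-j)*(x-j-1)) - v*((x-j-1)*(x-j-2)) - p*(x-j-1))/(j*v*p)"
    using assms(1-3) by (simp add: field_simps)
  also have "j*((x-j)*(x-j-1)) - v*((x-j-1)*(x-j-2)) - p*(x-j-1) = v*(x-j-1)"
    unfolding hv hp by (simp add: algebra_simps)
  also have "v*(x-j-1)/(j*v*p) = (x-j-1)/(j*p)" using assms(1-3) by simp
  finally show ?thesis .
qed
lemma ID6: fixes x k v p z :: real assumes "v \<noteq> 0" "p \<noteq> 0" "x \<noteq> 0"
  shows "k*v/x^2 * (z/(v*p)) = k*z/(x^2*p)"
  using assms by (simp add: field_simps power2_eq_square)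
lemma ID7: fixes x k v p a :: real assumes "p \<noteq> 0" "x \<noteq> 0"
  shows "k*v*(x-k)/(x^2*p) - k*v/x^2*a = k*v/x^2*((x-k)/p - a)"
  using assms by (simp add: field_simps power2_eq_square)

definition g1 :: "nat \<Rightarrow> nat \<Rightarrow> real" where
  "g1 n k = real k * (real n - real k)^2 / ((real n)^2 * (real n - 1))"

definition g2 :: "nat \<Rightarrow> nat \<Rightarrow> real" where
  "g2 n k = real k * (real k - 1) * (real n - real k) / ((real n)^2 * (real n - 1))"

lemma G_rank1:
  assumes n2: "2 \<le> n" and k: "1 \<le> k" "k \<le> n"
  shows "G n k (k - 1) = g1 n k"
proof -
  have h: "(Suc (k - 1) = k) = True" using k by simp
  have "G n k (k - 1) = (1 - real k / real n) * (real k * (real n - real k) / (real n * (real n - 1)))"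
    unfolding G_def by (simp only: h if_True of_nat_diff[OF k(2)])
  also have "\<dots> = g1 n k" unfolding g1_def by (rule ID1) (use n2 in auto)
  finally show ?thesis .
qed

lemma G_rank2:
  assumes n2: "2 \<le> n" and k: "2 \<le> k" "k \<le> n"
  shows "G n k (k - 2) = g2 n k"
proof -
  have h1: "(Suc (k - 2) = k) = False" and h2: "(Suc (Suc (k - 2)) = k) = True" using k by auto
  have "G n k (k - 2) = (1 - real k / real n) * (real k * (real k - 1) / (real n * (real n - 1)))"
    unfolding G_def by (simp only: h1 h2 if_True if_False)
  also have "\<dots> = g2 n k" unfolding g2_def by (rule ID2) (use n2 in auto)
  finally show ?thesis .
qed

lemma G_other:
  assumes "Suc (Suc c) < k"
  shows "G n k c = 0"
  using assms unfolding G_def by simp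

lemma g12_sum:
  assumes "2 \<le> n"
  shows "g1 n k + g2 n k = real k * (real n - real k) / (real n)^2"
  unfolding g1_def g2_def by (rule ID3) (use assms in auto)

fun WW :: "nat \<Rightarrow> nat \<Rightarrow> real" where
  "WW n 0 = 0"
| "WW n (Suc i) = (g1 n (n - i) + g2 n (n - i) + (real (n - i) - 2) * WW n i) / real (n - i)"

definition Wt :: "nat \<Rightarrow> nat \<Rightarrow> real" where
  "Wt n k = WW n (n - k)"

lemma Wt_n: "Wt n n = 0" by (simp add: Wt_def)

lemma Wt_step:
  assumes "1 \<le> k" "k \<le> n"
  shows "Wt n (k - 1) = (g1 n k + g2 n k + (real k - 2) * Wt n k) / real k"
proof -
  have "n - (k - 1) = Suc (n - k)" using assms by simp
  moreover have "n - (n - k) = k" using assms by simp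
  ultimately show ?thesis unfolding Wt_def using assms by simp
qed

fun AA :: "nat \<Rightarrow> nat \<Rightarrow> real" where
  "AA n 0 = 0"
| "AA n (Suc i) = AA n i + (real n - real (n - i)) / ((real (n - i) - 1) * (real (n - i) - 2))"

definition A :: "nat \<Rightarrow> nat \<Rightarrow> real" where
  "A n k = AA n (n - k)"

lemma A_n: "A n n = 0" by (simp add: A_def)

lemma A_step:
  assumes "1 \<le> k" "k \<le> n"
  shows "A n (k - 1) = A n k + (real n - real k) / ((real k - 1) * (real k - 2))"
proof -
  have "n - (k - 1) = Suc (n - k)" using assms by simp
  moreover have "n - (n - k) = k" using assms by simp
  ultimately show ?thesis unfolding A_def using assms by simp
qed

lemma A_step':
  assumes "2 \<le> k" "k < n"
  shows "A n k = A n (Suc k) + (real n - real k - 1) / (real k * (real k - 1))"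
  using A_step[of "Suc k" n] assms by (simp add: algebra_simps)

lemma A_nonneg:
  assumes "2 \<le> k" "k \<le> n"
  shows "A n k \<ge> 0"
  using assms(2)
proof (induction k rule: inc_induct)
  case base then show ?case by (simp add: A_n)
next
  case (step j)
  show ?case
  proof (cases "2 \<le> j")
    case True
    have "(real n - real j - 1) / (real j * (real j - 1)) \<ge> 0"
      using True step.hyps by (intro divide_nonneg_pos) auto
    then show ?thesis using A_step'[OF True step.hyps(2)] step.IH by simp
  next
    case False then show ?thesis using assms step.hyps by simp
  qed
qed

lemma Wt_closed:
  assumes n2: "2 \<le> n" and k: "2 \<le> k" "k \<le> n"
  shows "Wt n k = real k * (real k - 1) / (real n)^2 * A n k"
  using k(2) k(1)
proof (induction k rule: inc_induct)
  case base then show ?case by (simp add: Wt_n A_n)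
next
  case (step j)
  have j2: "2 \<le> j" by fact
  have IH: "Wt n (Suc j) = real (Suc j) * (real (Suc j) - 1) / (real n)^2 * A n (Suc j)"
    using step.IH j2 by simp
  have ws: "Wt n j = (g1 n (Suc j) + g2 n (Suc j) + (real (Suc j) - 2) * Wt n (Suc j)) / real (Suc j)"
    using Wt_step[of "Suc j" n] step.hyps by simp
  have gs: "g1 n (Suc j) + g2 n (Suc j) = real (Suc j) * (real n - real (Suc j)) / (real n)^2"
    by (rule g12_sum[OF n2])
  have as: "A n j = A n (Suc j) + (real n - real j - 1) / (real j * (real j - 1))"
    using A_step'[OF j2 step.hyps(2)] .
  have e1: "real (Suc j) - 2 = real j - 1" and e2: "real (Suc j) - 1 = real j"
    and e3: "real n - real (Suc j) = real n - real j - 1" by simp_all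
  have "Wt n j = (real (Suc j) * (real n - real (Suc j)) / (real n)^2 + (real j - 1) * (real (Suc j) * real j / (real n)^2 * A n (Suc j))) / real (Suc j)"
    unfolding ws gs IH e1 e2 ..
  also have "\<dots> = real j * (real j - 1) / (real n)^2 * (A n (Suc j) + (real n - real (Suc j)) / (real j * (real j - 1)))"
    by (rule ID4) (use n2 j2 in auto)
  also have "\<dots> = real j * (real j - 1) / (real n)^2 * A n j" unfolding as e3 ..
  finally show ?case .
qed

lemma A_bound:
  assumes n2: "2 \<le> n" and k: "2 \<le> k" "k \<le> n"
  shows "A n k \<le> (real n - real k) * (real n - real k - 1) / ((real k - 1) * (real n - 1))"
  using k(2) k(1)
proof (induction k rule: inc_induct)
  case base then show ?case by (simp add: A_n)
next
  case (step j)
  have j2: "2 \<le> j" by fact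
  have e2: "real (Suc j) - 1 = real j" and e3: "real n - real (Suc j) = real n - real j - 1"
    and e4: "real n - real j - 1 - 1 = real n - real j - 2" by simp_all
  have IH: "A n (Suc j) \<le> (real n - real j - 1) * (real n - real j - 2) / (real j * (real n - 1))"
    using step.IH j2 unfolding e2 e3 e4 by simp
  have as: "A n j = A n (Suc j) + (real n - real j - 1) / (real j * (real j - 1))"
    using A_step'[OF j2 step.hyps(2)] .
  have d: "(real n - real j) * (real n - real j - 1) / ((real j - 1) * (real n - 1)) -
      ((real n - real j - 1) * (real n - real j - 2) / (real j * (real n - 1)) + (real n - real j - 1) / (real j * (real j - 1)))
      = (real n - real j - 1) / (real j * (real n - 1))"
    by (rule ID5) (use j2 n2 in auto)
  have "(real n - real j - 1) / (real j * (real n - 1)) \<ge> 0"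
    using step.hyps j2 n2 by (intro divide_nonneg_pos) auto
  then show ?case using IH as d by linarith
qed

lemma Wt_le_g1:
  assumes n2: "2 \<le> n" and k: "2 \<le> k" "k \<le> n"
  shows "Wt n k \<le> g1 n k"
proof -
  have pos: "real k * (real k - 1) / (real n)^2 \<ge> 0" using k by simp
  have "Wt n k \<le> real k * (real k - 1) / (real n)^2 * ((real n - real k) * (real n - real k - 1) / ((real k - 1) * (real n - 1)))"
    unfolding Wt_closed[OF assms] by (rule mult_left_mono[OF A_bound[OF assms] pos])
  also have "\<dots> = real k * ((real n - real k) * (real n - real k - 1)) / ((real n)^2 * (real n - 1))"
    by (rule ID6) (use k n2 in auto)
  also have "\<dots> \<le> g1 n k" unfolding g1_def power2_eq_square[of "real n - real k"]
  proof (rule divide_right_mono)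
    have "(real n - real k) * (real n - real k - 1) \<le> (real n - real k) * (real n - real k)"
      using k by (intro mult_left_mono) auto
    then show "real k * ((real n - real k) * (real n - real k - 1)) \<le> real k * ((real n - real k) * (real n - real k))"
      by (rule mult_left_mono) simp
  qed (use n2 in simp)
  finally show ?thesis .
qed

definition phi :: "nat \<Rightarrow> nat \<Rightarrow> real" where
  "phi n k = (real n - real k) / (real n - 1) - A n k"

lemma g2_Wt_phi:
  assumes n2: "2 \<le> n" and k: "2 \<le> k" "k \<le> n"
  shows "g2 n k - Wt n k = real k * (real k - 1) / (real n)^2 * phi n k"
  unfolding Wt_closed[OF assms] phi_def g2_def by (rule ID7) (use n2 in auto)

lemma phi_sign:
  assumes n2: "2 \<le> n" and k: "2 \<le> k" "k \<le> n"
  shows "(Wt n k \<le> g2 n k \<longleftrightarrow> phi n k \<ge> 0)" "(g2 n k < Wt n k \<longleftrightarrow> phi n k < 0)"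
proof -
  have p: "real k * (real k - 1) / (real n)^2 > 0" using k by simp
  have e: "g2 n k - Wt n k = real k * (real k - 1) / (real n)^2 * phi n k" by (rule g2_Wt_phi[OF assms])
  show "(Wt n k \<le> g2 n k \<longleftrightarrow> phi n k \<ge> 0)"
  proof
    assume "Wt n k \<le> g2 n k"
    then have "0 \<le> real k * (real k - 1) / (real n)^2 * phi n k" using e by simp
    show "phi n k \<ge> 0"
    proof (rule ccontr)
      assume "\<not> phi n k \<ge> 0"
      then have "phi n k < 0" by simp
      then have "real k * (real k - 1) / (real n)^2 * phi n k < 0" by (rule mult_pos_neg[OF p])
      then show False using \<open>0 \<le> real k * (real k - 1) / (real n)^2 * phi n k\<close> by simp
    qed
  next
    assume "phi n k \<ge> 0"
    then have "0 \<le> real k * (real k - 1) / (real n)^2 * phi n k" using p by (intro mult_nonneg_nonneg) auto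
    then show "Wt n k \<le> g2 n k" using e by simp
  qed
  show "(g2 n k < Wt n k \<longleftrightarrow> phi n k < 0)"
  proof
    assume "g2 n k < Wt n k"
    then have neg: "real k * (real k - 1) / (real n)^2 * phi n k < 0" using e by simp
    show "phi n k < 0"
    proof (rule ccontr)
      assume "\<not> phi n k < 0"
      then have "0 \<le> real k * (real k - 1) / (real n)^2 * phi n k" using p by (intro mult_nonneg_nonneg) auto
      then show False using neg by simp
    qed
  next
    assume "phi n k < 0"
    then have "real k * (real k - 1) / (real n)^2 * phi n k < 0" by (rule mult_pos_neg[OF p])
    then show "g2 n k < Wt n k" using e by simp
  qed
qed

lemma phi_n: "phi n n = 0" by (simp add: phi_def A_n)

lemma phi_diff:
  assumes "2 \<le> j" "j < n"
  shows "phi n (Suc j) - phi n j = (real n - real j - 1) / (real j * (real j - 1)) - 1 / (real n - 1)"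
proof -
  have "(real n - real (Suc j)) / (real n - 1) - (real n - real j) / (real n - 1) = ((real n - real (Suc j)) - (real n - real j)) / (real n - 1)"
    by (rule diff_divide_distrib[symmetric])
  also have "\<dots> = - 1 / (real n - 1)" by simp
  finally have h: "(real n - real (Suc j)) / (real n - 1) - (real n - real j) / (real n - 1) = - 1 / (real n - 1)" .
  show ?thesis unfolding phi_def A_step'[OF assms] using h by simp
qed

lemma phi_closed:
  assumes n2: "2 \<le> n" and k: "2 \<le> k" "k < n" and pk: "phi n k \<ge> 0"
  shows "phi n (Suc k) \<ge> 0"
proof (cases "phi n (Suc k) - phi n k \<ge> 0")
  case True then show ?thesis using pk by linarith
next
  case False
  then have neg: "(real n - real k - 1) / (real k * (real k - 1)) < 1 / (real n - 1)"
    using phi_diff[OF k(1) k(2)] by simp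
  have dneg: "phi n (Suc j) - phi n j < 0" if "k \<le> j" "j < n" for j
  proof -
    have "(real n - real j - 1) / (real j * (real j - 1)) \<le> (real n - real k - 1) / (real k * (real k - 1))"
    proof (rule frac_le)
      show "0 \<le> real n - real k - 1" using k by simp
      show "real n - real j - 1 \<le> real n - real k - 1" using that by simp
      show "0 < real k * (real k - 1)" using k by simp
      show "real k * (real k - 1) \<le> real j * (real j - 1)" using that k by (intro mult_mono) auto
    qed
    then show ?thesis using phi_diff[of j n] that k neg by simp
  qed
  have "phi n j \<ge> 0" if "Suc k \<le> j" "j \<le> n" for j
    using that(2) that(1)
  proof (induction j rule: inc_induct)
    case base then show ?case by (simp add: phi_n)
  next
    case (step j)
    then show ?case using dneg[of j] by simp
  qed
  then show ?thesis using k by simp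
qed

lemma V_nonneg:
  assumes "k \<le> n"
  shows "V n k \<ge> 0"
  using assms
proof (induction k rule: inc_induct)
  case base then show ?case by (simp add: V_n)
next
  case (step j)
  have "(\<Sum>c\<le>j. max (G n (Suc j) c) (V n (Suc j))) \<ge> 0"
    using step.IH by (intro sum_nonneg) auto
  then show ?case unfolding V_step[OF step.hyps(2)] by simp
qed

lemma sum_split2:
  fixes k :: nat
  assumes "2 \<le> k"
  shows "(\<Sum>c\<le>k - 1. f c) = f (k - 1) + f (k - 2) + (\<Sum>c<k - 2. f c)"
proof -
  have "{..k - 1} = insert (k - 1) (insert (k - 2) {..<k - 2})" using assms by auto
  moreover have "k - 1 \<notin> insert (k - 2) {..<k - 2}" "k - 2 \<notin> {..<k - 2}" using assms by auto
  ultimately show ?thesis by (simp add: add.assoc)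
qed

lemma V_rec2:
  assumes n2: "2 \<le> n" and k: "2 \<le> k" "k \<le> n"
  shows "V n (k - 1) = (max (g1 n k) (V n k) + max (g2 n k) (V n k) + (real k - 2) * V n k) / real k"
proof -
  have km: "k - 1 < n" "Suc (k - 1) = k" using k by auto
  have Vk: "V n k \<ge> 0" using V_nonneg k by simp
  have "V n (k - 1) = (\<Sum>c\<le>k - 1. max (G n k c) (V n k)) / real k"
    using V_step[OF km(1)] km(2) by simp
  also have "(\<Sum>c\<le>k - 1. max (G n k c) (V n k)) =
      max (G n k (k - 1)) (V n k) + max (G n k (k - 2)) (V n k) + (\<Sum>c<k - 2. max (G n k c) (V n k))"
    by (rule sum_split2[OF k(1)])
  also have "(\<Sum>c<k - 2. max (G n k c) (V n k)) = (\<Sum>c<k - 2. V n k)"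
  proof (rule sum.cong[OF refl])
    fix c assume "c \<in> {..<k - 2}"
    then have "G n k c = 0" using k by (intro G_other) auto
    then show "max (G n k c) (V n k) = V n k" using Vk by simp
  qed
  also have "(\<Sum>c<k - 2. V n k) = (real k - 2) * V n k" using k by (simp add: of_nat_diff)
  finally show ?thesis using G_rank1[OF n2, of k] G_rank2[OF n2 k] k by simp
qed

lemma V_rec1:
  assumes n2: "2 \<le> n"
  shows "V n 0 = max (g1 n 1) (V n 1)"
proof -
  have "V n 0 = (\<Sum>c\<le>0. max (G n 1 c) (V n 1)) / real 1" using V_step[of 0 n] n2 by simp
  then show ?thesis using G_rank1[OF n2, of 1] n2 by simp
qed

lemma Wt_le_V:
  assumes n2: "2 \<le> n" and k: "1 \<le> k" "k \<le> n"
  shows "Wt n k \<le> V n k"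
  using k(2) k(1)
proof (induction k rule: inc_induct)
  case base then show ?case by (simp add: Wt_n V_n)
next
  case (step j)
  have k2: "2 \<le> Suc j" "Suc j \<le> n" using step by auto
  have ws: "Wt n j = (g1 n (Suc j) + g2 n (Suc j) + (real (Suc j) - 2) * Wt n (Suc j)) / real (Suc j)"
    using Wt_step[of "Suc j" n] step.hyps by simp
  have vs: "V n j = (max (g1 n (Suc j)) (V n (Suc j)) + max (g2 n (Suc j)) (V n (Suc j)) + (real (Suc j) - 2) * V n (Suc j)) / real (Suc j)"
    using V_rec2[OF n2 k2] by simp
  have IH: "Wt n (Suc j) \<le> V n (Suc j)" using step.IH step.prems by simp
  have c: "(real (Suc j) - 2) * Wt n (Suc j) \<le> (real (Suc j) - 2) * V n (Suc j)"
    using IH k2 by (intro mult_left_mono) auto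
  have "g1 n (Suc j) + g2 n (Suc j) + (real (Suc j) - 2) * Wt n (Suc j) \<le>
        max (g1 n (Suc j)) (V n (Suc j)) + max (g2 n (Suc j)) (V n (Suc j)) + (real (Suc j) - 2) * V n (Suc j)"
    using c by (intro add_mono) auto
  then show ?case unfolding ws vs by (intro divide_right_mono) auto
qed

lemma Wt_1_le_g1:
  assumes n2: "2 \<le> n"
  shows "Wt n 1 \<le> g1 n 1"
proof -
  have w: "Wt n 1 = (g1 n 2 + g2 n 2 + (real 2 - 2) * Wt n 2) / real 2"
    using Wt_step[of 2 n] n2 by simp
  have "g1 n 2 + g2 n 2 = real 2 * (real n - real 2) / (real n)^2" by (rule g12_sum[OF n2])
  then have "Wt n 1 = (real 2 * (real n - real 2) / (real n)^2) / real 2" using w by simp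
  also have "\<dots> = (real n - 2) / (real n)^2"
  proof -
    have "real n \<noteq> 0" using n2 by simp
    then show ?thesis by (simp add: field_simps)
  qed
  finally have "Wt n 1 = (real n - 2) / (real n)^2" .
  also have "\<dots> \<le> (real n - 1) / (real n)^2" by (intro divide_right_mono) auto
  also have "(real n - 1) / (real n)^2 = g1 n 1"
  proof -
    have "real n - 1 \<noteq> 0" using n2 by simp
    then show ?thesis unfolding g1_def by (simp add: power2_eq_square)
  qed
  finally show ?thesis .
qed

lemma Wt_le_g1':
  assumes n2: "2 \<le> n" and k: "1 \<le> k" "k \<le> n"
  shows "Wt n k \<le> g1 n k"
proof (cases "k = 1")
  case True then show ?thesis using Wt_1_le_g1[OF n2] by simp
next
  case False then show ?thesis using Wt_le_g1[OF n2] k by simp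
qed

fun W1aux :: "nat \<Rightarrow> nat \<Rightarrow> nat \<Rightarrow> real" where
  "W1aux n s 0 = Wt n s"
| "W1aux n s (Suc i) = (g1 n (s - i) + (real (s - i) - 1) * W1aux n s i) / real (s - i)"

definition W1 :: "nat \<Rightarrow> nat \<Rightarrow> nat \<Rightarrow> real" where
  "W1 n s k = W1aux n s (s - k)"

lemma W1_s: "W1 n s s = Wt n s" by (simp add: W1_def)

lemma W1_step:
  assumes "1 \<le> k" "k \<le> s"
  shows "W1 n s (k - 1) = (g1 n k + (real k - 1) * W1 n s k) / real k"
proof -
  have "s - (k - 1) = Suc (s - k)" "s - (s - k) = k" using assms by auto
  then show ?thesis unfolding W1_def by simp
qed

lemma W1_le_V:
  assumes n2: "2 \<le> n" and s: "1 \<le> s" "s \<le> n" and k: "k \<le> s"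
  shows "W1 n s k \<le> V n k"
  using k
proof (induction k rule: inc_induct)
  case base then show ?case using W1_s Wt_le_V[OF n2 s] by simp
next
  case (step j)
  have IH: "W1 n s (Suc j) \<le> V n (Suc j)" by fact
  have w: "W1 n s j = (g1 n (Suc j) + real j * W1 n s (Suc j)) / real (Suc j)"
    using W1_step[of "Suc j" s n] step.hyps by simp
  show ?case
  proof (cases "j = 0")
    case True
    have "W1 n s j = g1 n 1" using w True by simp
    also have "\<dots> \<le> V n 0" using V_rec1[OF n2] by simp
    finally show ?thesis using True by simp
  next
    case False
    have k2: "2 \<le> Suc j" "Suc j \<le> n" using False step.hyps s by auto
    have vs: "V n j = (max (g1 n (Suc j)) (V n (Suc j)) + max (g2 n (Suc j)) (V n (Suc j)) + (real (Suc j) - 2) * V n (Suc j)) / real (Suc j)"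
      using V_rec2[OF n2 k2] by simp
    have "real j * W1 n s (Suc j) \<le> real j * V n (Suc j)" using IH by (intro mult_left_mono) auto
    also have "real j * V n (Suc j) = V n (Suc j) + (real (Suc j) - 2) * V n (Suc j)"
      using False by (simp add: algebra_simps)
    finally have "g1 n (Suc j) + real j * W1 n s (Suc j) \<le>
        max (g1 n (Suc j)) (V n (Suc j)) + max (g2 n (Suc j)) (V n (Suc j)) + (real (Suc j) - 2) * V n (Suc j)"
      by simp
    then show ?thesis unfolding w vs by (intro divide_right_mono) auto
  qed
qed

definition ee :: "nat \<Rightarrow> nat \<Rightarrow> nat \<Rightarrow> real" where
  "ee n s k = (g1 n k - W1 n s k) / real k"

lemma ID8: fixes K v a b w :: real assumes "K \<noteq> 0" "v \<noteq> 0" and hK: "K = v + 1"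
  shows "(a - w) / K - (b - (a + v * w) / K) / v = (a - b) / v"
proof -
  have "(a - w) / K - (b - (a + v * w) / K) / v = (v * (a - w) - (K * b - (a + v * w))) / (K * v)"
    using assms(1,2) by (simp add: field_simps)
  also have "v * (a - w) - (K * b - (a + v * w)) = K * (a - b)" unfolding hK by (simp add: algebra_simps)
  also have "K * (a - b) / (K * v) = (a - b) / v" using assms(1) by simp
  finally show ?thesis .
qed

lemma ee_diff:
  assumes "2 \<le> k" "k \<le> s"
  shows "ee n s k - ee n s (k - 1) = (g1 n k - g1 n (k - 1)) / (real k - 1)"
proof -
  have w: "W1 n s (k - 1) = (g1 n k + (real k - 1) * W1 n s k) / real k" using W1_step assms by simp
  have rk: "real (k - 1) = real k - 1" using assms by (simp add: of_nat_diff)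
  show ?thesis unfolding ee_def w rk by (rule ID8) (use assms in auto)
qed

lemma tau_closed:
  fixes k m :: real
  assumes m1: "1 \<le> m" and k1: "1 \<le> k" and h: "m * m < (k - 1) * (2 * m + 1)"
  shows "(m - 1) * (m - 1) < k * (2 * m - 1)"
proof (cases "k \<le> 2 * m")
  case True
  have h': "m * m < 2 * (k * m) + k - 2 * m - 1" using h by (simp add: algebra_simps)
  show ?thesis using h' True by (simp add: algebra_simps)
next
  case False
  have "2 * m * (2 * m - 1) < k * (2 * m - 1)" using False m1 by (intro mult_strict_right_mono) auto
  moreover have "1 * 1 \<le> m * m" using m1 by (intro mult_mono) auto
  then have "m * m \<ge> 1" by simp
  then have "(m - 1) * (m - 1) \<le> 2 * m * (2 * m - 1)" by (simp add: algebra_simps)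
  ultimately show ?thesis by linarith
qed

lemma dg1_form:
  assumes n2: "2 \<le> n" and k: "1 \<le> k" "k \<le> n"
  shows "g1 n k - g1 n (k - 1) = ((real n - real k) * (real n - real k) - (real k - 1) * (2 * (real n - real k) + 1)) / ((real n)^2 * (real n - 1))"
proof -
  have rk: "real (k - 1) = real k - 1" using k by (simp add: of_nat_diff)
  have "g1 n k - g1 n (k - 1) = (real k * (real n - real k)^2 - (real k - 1) * (real n - (real k - 1))^2) / ((real n)^2 * (real n - 1))"
    unfolding g1_def rk by (rule diff_divide_distrib[symmetric])
  also have "real k * (real n - real k)^2 - (real k - 1) * (real n - (real k - 1))^2 =
      (real n - real k) * (real n - real k) - (real k - 1) * (2 * (real n - real k) + 1)"
    by (simp add: algebra_simps power2_eq_square)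
  finally show ?thesis .
qed

lemma dg1_closed:
  assumes n2: "2 \<le> n" and k: "1 \<le> k" "Suc k \<le> n" and neg: "g1 n k - g1 n (k - 1) < 0"
  shows "g1 n (Suc k) - g1 n k < 0"
proof -
  have D: "(real n)^2 * (real n - 1) > 0" using n2 by simp
  let ?m = "real n - real k"
  have q: "(?m * ?m - (real k - 1) * (2 * ?m + 1)) / ((real n)^2 * (real n - 1)) < 0"
    using neg dg1_form[OF n2 k(1)] k by simp
  have h: "?m * ?m - (real k - 1) * (2 * ?m + 1) < 0"
  proof (rule ccontr)
    assume "\<not> ?m * ?m - (real k - 1) * (2 * ?m + 1) < 0"
    then have "(?m * ?m - (real k - 1) * (2 * ?m + 1)) / ((real n)^2 * (real n - 1)) \<ge> 0"
      using D by (intro divide_nonneg_pos) auto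
    then show False using q by simp
  qed
  have t: "(?m - 1) * (?m - 1) < real k * (2 * ?m - 1)"
    by (rule tau_closed) (use h k in auto)
  have X: "(real n - real (Suc k)) * (real n - real (Suc k)) - (real (Suc k) - 1) * (2 * (real n - real (Suc k)) + 1) < 0"
    using t by (simp add: algebra_simps)
  have e: "Suc k - 1 = k" by simp
  have f: "g1 n (Suc k) - g1 n (Suc k - 1) = ((real n - real (Suc k)) * (real n - real (Suc k)) - (real (Suc k) - 1) * (2 * (real n - real (Suc k)) + 1)) / ((real n)^2 * (real n - 1))"
    by (rule dg1_form[OF n2]) (use k in auto)
  have "((real n - real (Suc k)) * (real n - real (Suc k)) - (real (Suc k) - 1) * (2 * (real n - real (Suc k)) + 1)) / ((real n)^2 * (real n - 1)) < 0"
    by (rule divide_neg_pos[OF X D])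
  then show ?thesis using f unfolding e by simp
qed

lemma threshold_gen:
  assumes lo1: "1 \<le> lo" and lohi: "lo \<le> Suc hi"
    and closed: "\<And>k. lo \<le> k \<Longrightarrow> k < hi \<Longrightarrow> P k \<Longrightarrow> P (Suc k)"
  shows "\<exists>t. lo \<le> Suc t \<and> t \<le> hi \<and> (\<forall>k. t < k \<and> k \<le> hi \<longrightarrow> P k) \<and> (\<forall>k. lo \<le> k \<and> k \<le> t \<longrightarrow> \<not> P k)"
proof -
  define Q where "Q t \<longleftrightarrow> lo \<le> Suc t \<and> (\<forall>k. t < k \<and> k \<le> hi \<longrightarrow> P k)" for t
  have Qhi: "Q hi" unfolding Q_def using lohi by auto
  define t where "t = (LEAST t. Q t)"
  have Qt: "Q t" unfolding t_def using LeastI[of Q, OF Qhi] .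
  have thi: "t \<le> hi" unfolding t_def using Least_le[of Q, OF Qhi] .
  have notP: "\<not> P k" if k: "lo \<le> k" "k \<le> t" for k
  proof
    assume Pk: "P k"
    have all: "P j" if "k \<le> j" "j \<le> hi" for j
      using that(1,2)
    proof (induction j rule: dec_induct)
      case base show ?case by (fact Pk)
    next
      case (step j)
      then show ?case using closed[of j] k by simp
    qed
    have "Q (k - 1)" unfolding Q_def using k lo1 all by auto
    then have "t \<le> k - 1" unfolding t_def by (rule Least_le)
    then show False using k lo1 by simp
  qed
  show ?thesis using Qt thi notP unfolding Q_def by blast
qed

lemma ee_closed:
  assumes n2: "2 \<le> n" and s: "1 \<le> s" "s < n" and k: "1 \<le> k" "k < s" and ek: "ee n s k \<ge> 0"
  shows "ee n s (Suc k) \<ge> 0"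
proof -
  have dk: "ee n s (Suc k) - ee n s k = (g1 n (Suc k) - g1 n k) / real k"
    using ee_diff[of "Suc k" s n] k by simp
  show ?thesis
  proof (cases "g1 n (Suc k) - g1 n k \<ge> 0")
    case True
    then have "(g1 n (Suc k) - g1 n k) / real k \<ge> 0" by simp
    then show ?thesis using dk ek by linarith
  next
    case False
    have dneg: "g1 n j - g1 n (j - 1) < 0" if "Suc k \<le> j" "j \<le> n" for j
      using that
    proof (induction j rule: dec_induct)
      case base then show ?case using False by simp
    next
      case (step j)
      have "g1 n (Suc j) - g1 n j < 0" using dg1_closed[OF n2, of j] step k by simp
      then show ?case by simp
    qed
    have es: "ee n s s \<ge> 0"
      using Wt_le_g1'[OF n2 s(1)] s unfolding ee_def W1_s by simp
    have "ee n s j \<ge> 0" if "Suc k \<le> j" "j \<le> s" for j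
      using that(2) that(1)
    proof (induction j rule: inc_induct)
      case base show ?case by (fact es)
    next
      case (step j)
      have d: "ee n s (Suc j) - ee n s j = (g1 n (Suc j) - g1 n j) / real j"
        using ee_diff[of "Suc j" s n] step.hyps step.prems k by simp
      have "g1 n (Suc j) - g1 n (Suc j - 1) < 0" using dneg[of "Suc j"] step.hyps step.prems s by simp
      then have "(g1 n (Suc j) - g1 n j) / real j < 0"
        using step.prems k by (intro divide_neg_pos) auto
      then show ?case using d step.IH step.prems by simp
    qed
    then show ?thesis using k by simp
  qed
qed

lemma main_n2:
  assumes n2: "2 \<le> n"
  shows "\<exists>r s. r \<le> s \<and> s \<le> n \<and> (\<forall>m q. m < n \<longrightarrow> q \<in> orders (Suc m) \<longrightarrow>
     (threshold_strategy r s q \<longrightarrow> V n (Suc m) \<le> G n (Suc m) (last q)) \<and>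
     (\<not> threshold_strategy r s q \<longrightarrow> G n (Suc m) (last q) \<le> V n (Suc m)))"
proof -
  obtain s where s1: "2 \<le> Suc s" and sn: "s \<le> n" and sup: "\<forall>k. s < k \<and> k \<le> n \<longrightarrow> phi n k \<ge> 0"
    and slow: "\<forall>k. 2 \<le> k \<and> k \<le> s \<longrightarrow> \<not> phi n k \<ge> 0"
    using threshold_gen[of 2 n "\<lambda>k. phi n k \<ge> 0"] phi_closed[OF n2] n2 by auto
  have s1': "1 \<le> s" using s1 by simp
  have sltn: "s < n"
  proof (rule ccontr)
    assume "\<not> s < n"
    then have "s = n" using sn by simp
    then show False using slow[rule_format, of n] n2 phi_n[of n] by simp
  qed
  obtain r where rs: "r \<le> s" and rup: "\<forall>k. r < k \<and> k \<le> s \<longrightarrow> ee n s k \<ge> 0"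
    and rlow: "\<forall>k. 1 \<le> k \<and> k \<le> r \<longrightarrow> \<not> ee n s k \<ge> 0"
    using threshold_gen[of 1 s "\<lambda>k. ee n s k \<ge> 0"] ee_closed[OF n2 s1' sltn] by auto
  have VS: "V n k = Wt n k" if "s \<le> k" "k \<le> n" for k
    using that(2) that(1)
  proof (induction k rule: inc_induct)
    case base then show ?case by (simp add: V_n Wt_n)
  next
    case (step j)
    have k2: "2 \<le> Suc j" "Suc j \<le> n" using step.hyps step.prems s1' by auto
    have IH: "V n (Suc j) = Wt n (Suc j)" using step.IH step.prems by simp
    have a1: "V n (Suc j) \<le> g1 n (Suc j)" using IH Wt_le_g1[OF n2 k2] by simp
    have a2: "V n (Suc j) \<le> g2 n (Suc j)"
      using IH phi_sign(1)[OF n2 k2] sup step.prems step.hyps by auto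
    have "V n j = (max (g1 n (Suc j)) (V n (Suc j)) + max (g2 n (Suc j)) (V n (Suc j)) + (real (Suc j) - 2) * V n (Suc j)) / real (Suc j)"
      using V_rec2[OF n2 k2] by simp
    also have "\<dots> = (g1 n (Suc j) + g2 n (Suc j) + (real (Suc j) - 2) * Wt n (Suc j)) / real (Suc j)"
      using a1 a2 IH by simp
    also have "\<dots> = Wt n j" using Wt_step[of "Suc j" n] k2 by simp
    finally show ?case .
  qed
  have ee_pos: "W1 n s k \<le> g1 n k" if "1 \<le> k" "ee n s k \<ge> 0" for k
    using that unfolding ee_def by (simp add: zero_le_divide_iff)
  have ee_neg: "g1 n k < W1 n s k" if "1 \<le> k" "\<not> ee n s k \<ge> 0" for k
    using that unfolding ee_def by (simp add: zero_le_divide_iff)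
  have VR: "V n k = W1 n s k" if "r \<le> k" "k \<le> s" for k
    using that(2) that(1)
  proof (induction k rule: inc_induct)
    case base then show ?case using VS[of s] sn by (simp add: W1_s)
  next
    case (step j)
    have IH: "V n (Suc j) = W1 n s (Suc j)" using step.IH step.prems by simp
    have a1: "V n (Suc j) \<le> g1 n (Suc j)" using IH ee_pos[of "Suc j"] rup step.hyps step.prems by simp
    have w: "W1 n s j = (g1 n (Suc j) + real j * W1 n s (Suc j)) / real (Suc j)"
      using W1_step[of "Suc j" s n] step.hyps by simp
    show ?case
    proof (cases "j = 0")
      case True
      have "V n j = max (g1 n 1) (V n 1)" using V_rec1[OF n2] True by simp
      also have "\<dots> = g1 n 1" using a1 True by simp
      also have "\<dots> = W1 n s j" using w True by simp
      finally show ?thesis .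
    next
      case False
      have k2: "2 \<le> Suc j" "Suc j \<le> n" using False step.hyps sltn by auto
      have a2: "g2 n (Suc j) \<le> V n (Suc j)"
      proof -
        have "\<not> phi n (Suc j) \<ge> 0" using slow k2 step.hyps by auto
        then have "g2 n (Suc j) < Wt n (Suc j)" using phi_sign(2)[OF n2 k2] by simp
        moreover have "Wt n (Suc j) \<le> V n (Suc j)" using Wt_le_V[OF n2] k2 by simp
        ultimately show ?thesis by simp
      qed
      have "V n j = (max (g1 n (Suc j)) (V n (Suc j)) + max (g2 n (Suc j)) (V n (Suc j)) + (real (Suc j) - 2) * V n (Suc j)) / real (Suc j)"
        using V_rec2[OF n2 k2] by simp
      also have "\<dots> = (g1 n (Suc j) + real j * V n (Suc j)) / real (Suc j)"
        using a1 a2 False by (simp add: algebra_simps)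
      also have "\<dots> = W1 n s j" using w IH by simp
      finally show ?thesis .
    qed
  qed
  have Vnn: "V n k \<ge> 0" if "k \<le> n" for k using V_nonneg that by simp
  show ?thesis
  proof (intro exI conjI)
    show "r \<le> s" by (rule rs)
    show "s \<le> n" by (rule sn)
    show "\<forall>m q. m < n \<longrightarrow> q \<in> orders (Suc m) \<longrightarrow>
     (threshold_strategy r s q \<longrightarrow> V n (Suc m) \<le> G n (Suc m) (last q)) \<and>
     (\<not> threshold_strategy r s q \<longrightarrow> G n (Suc m) (last q) \<le> V n (Suc m))"
  proof (intro allI impI)
    fix m q assume m: "m < n" and q: "q \<in> orders (Suc m)"
    let ?k = "Suc m"
    have lq: "length q = ?k" using orders_length[OF q] .
    have ne: "q \<noteq> []" using lq by auto
    have lastq: "q ! (?k - 1) = last q" using ne lq by (simp add: last_conv_nth)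
    define c where "c = last q"
    have cm: "c \<le> m"
    proof -
      have "last q \<in> set q" using ne by simp
      then show ?thesis using q unfolding orders_def c_def by auto
    qed
    have T: "threshold_strategy r s q \<longleftrightarrow> (r < ?k \<and> ?k \<le> s \<and> c + 1 = ?k) \<or> (s < ?k \<and> c + 2 \<ge> ?k)"
      unfolding threshold_strategy_def Let_def lq lastq c_def ..
    have kn: "?k \<le> n" using m by simp
    have goal: "(threshold_strategy r s q \<longrightarrow> V n ?k \<le> G n ?k c) \<and> (\<not> threshold_strategy r s q \<longrightarrow> G n ?k c \<le> V n ?k)"
    proof (cases "c = m")
      case True
      have Gc: "G n ?k c = g1 n ?k" using G_rank1[OF n2, of ?k] kn True by simp
      have Tc: "threshold_strategy r s q \<longleftrightarrow> r < ?k" using T True rs by auto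
      show ?thesis
      proof (cases "r < ?k")
        case rk: True
        have "V n ?k \<le> g1 n ?k"
        proof (cases "?k \<le> s")
          case True
          have "V n ?k = W1 n s ?k" using VR rk True by simp
          also have "\<dots> \<le> g1 n ?k" using ee_pos[of ?k] rup rk True by simp
          finally show ?thesis .
        next
          case False
          have k2: "2 \<le> ?k" using False s1' by simp
          have "V n ?k = Wt n ?k" using VS False kn by simp
          also have "\<dots> \<le> g1 n ?k" using Wt_le_g1[OF n2 k2 kn] .
          finally show ?thesis .
        qed
        then show ?thesis using Tc rk Gc by simp
      next
        case rk: False
        have ks: "?k \<le> s" using rk rs by simp
        have "g1 n ?k < W1 n s ?k" using ee_neg[of ?k] rlow rk by simp
        also have "\<dots> \<le> V n ?k" using W1_le_V[OF n2 s1' sn ks] .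
        finally show ?thesis using Tc rk Gc by simp
      qed
    next
      case cF: False
      show ?thesis
      proof (cases "Suc c = m")
        case True
        have k2: "2 \<le> ?k" using True by simp
        have e: "Suc m - 2 = c" using True by simp
        have Gc: "G n ?k c = g2 n ?k" using G_rank2[OF n2 k2 kn, unfolded e] .
        have Tc: "threshold_strategy r s q \<longleftrightarrow> s < ?k" using T True by auto
        show ?thesis
        proof (cases "s < ?k")
          case sk: True
          have "V n ?k = Wt n ?k" using VS sk kn by simp
          also have "\<dots> \<le> g2 n ?k" using phi_sign(1)[OF n2 k2 kn] sup sk kn by simp
          finally show ?thesis using Tc sk Gc by simp
        next
          case sk: False
          have "\<not> phi n ?k \<ge> 0" using slow sk k2 by simp
          then have "g2 n ?k < Wt n ?k" using phi_sign(2)[OF n2 k2 kn] by simp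
          also have "\<dots> \<le> V n ?k" using Wt_le_V[OF n2 _ kn] by simp
          finally show ?thesis using Tc sk Gc by simp
        qed
      next
        case False
        have lt: "Suc (Suc c) < ?k" using cF False cm by simp
        have Gc: "G n ?k c = 0" by (rule G_other[OF lt])
        have "\<not> threshold_strategy r s q" using T lt by auto
        then show ?thesis using Gc Vnn[OF kn] by simp
      qed
    qed
    show "(threshold_strategy r s q \<longrightarrow> V n ?k \<le> G n ?k (last q)) \<and> (\<not> threshold_strategy r s q \<longrightarrow> G n ?k (last q) \<le> V n ?k)"
      using goal c_def by simp
  qed
  qed
qed

theorem theorem8:
  fixes n :: nat
  shows "\<exists>r s. r \<le> s \<and> s \<le> n \<and>
           (\<forall>S :: strategy. expected_payoff n S \<le> expected_payoff n (threshold_strategy r s))"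
proof (cases "2 \<le> n")
  case True
  obtain r s where rs: "r \<le> s" "s \<le> n" and opt: "\<forall>m q. m < n \<longrightarrow> q \<in> orders (Suc m) \<longrightarrow>
     (threshold_strategy r s q \<longrightarrow> V n (Suc m) \<le> G n (Suc m) (last q)) \<and>
     (\<not> threshold_strategy r s q \<longrightarrow> G n (Suc m) (last q) \<le> V n (Suc m))"
    using main_n2[OF True] by blast
  have "expected_payoff n (threshold_strategy r s) = V n 0"
    by (rule optimal_value) (use opt in blast)
  then show ?thesis using rs upper_bound by metis
next
  case False
  then have n1: "n \<le> 1" by simp
  have "expected_payoff n (threshold_strategy 0 0) = V n 0"
  proof (rule optimal_value)
    fix m q assume m: "m < n" and "q \<in> orders (Suc m)"
    then have "m = 0" "n = 1" using n1 by auto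
    then have "G n (Suc m) (last q) = 0" "V n (Suc m) = 0" by (simp_all add: G_def V_n)
    then show "(threshold_strategy 0 0 q \<longrightarrow> V n (Suc m) \<le> G n (Suc m) (last q)) \<and>
       (\<not> threshold_strategy 0 0 q \<longrightarrow> G n (Suc m) (last q) \<le> V n (Suc m))" by simp
  qed
  then show ?thesis using upper_bound by (metis order_refl zero_le)
qed

end
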